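(* Let $R$ be an irreducible root lattice of type $A_n$ $(n\ge 1)$, $D_n$ $(n\ge 4)$, $E_6$, $E_7$ or $E_8$, with roots of squared norm $2$, let $h$ be its Coxeter number, and let $R^*=\{\alpha\in\mathbb{Q}\otimes_{\mathbb{Z}}R : \langle \alpha,R\rangle\subset\mathbb{Z}\}$ be its dual lattice. Let $\gamma+R$ be a coset of $R$ in $R^*$ and put $k=\min\{\langle\alpha,\alpha\rangle : \alpha\in\gamma+R\}$. For any $\eta\in\gamma+R$ with $\langle\eta,\eta\rangle=k$, define \[X_\eta=\{(\alpha,\beta)\in R\times(\gamma+R) : \langle\alpha,\alpha\rangle=2,\ \langle\beta,\beta\rangle=k,\ \alpha+\beta=\eta\}.\] Then $|X_\eta|=kh$.
   Context: The Coxeter numbers are $h=n+1$ for $A_n$, $h=2n-2$ for $D_n$, and $h=12,18,30$ for $E_6,E_7,E_8$ respectively. *)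

theory Defs
  imports Complex_Main
begin

text \<open>Vectors of Euclidean space R^m are modelled as functions nat => real that vanish
outside the coordinates 0..m-1. Each irreducible root lattice is given by its standard
model with roots of squared norm 2.\<close>

datatype root_type = TypeA nat | TypeD nat | TypeE6 | TypeE7 | TypeE8

definition ip :: "nat \<Rightarrow> (nat \<Rightarrow> real) \<Rightarrow> (nat \<Rightarrow> real) \<Rightarrow> real" where
  "ip m x y = (\<Sum>i<m. x i * y i)"

definition vadd :: "(nat \<Rightarrow> real) \<Rightarrow> (nat \<Rightarrow> real) \<Rightarrow> (nat \<Rightarrow> real)" where
  "vadd x y = (\<lambda>i. x i + y i)"

definition int_vecs :: "nat \<Rightarrow> (nat \<Rightarrow> real) set" where
  "int_vecs m = {x. (\<forall>i<m. x i \<in> \<int>) \<and> (\<forall>i\<ge>m. x i = 0)}"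

definition A_lattice :: "nat \<Rightarrow> (nat \<Rightarrow> real) set" where
  "A_lattice n = {x \<in> int_vecs (n+1). (\<Sum>i<n+1. x i) = 0}"

definition D_lattice :: "nat \<Rightarrow> (nat \<Rightarrow> real) set" where
  "D_lattice n = {x \<in> int_vecs n. \<exists>k::int. (\<Sum>i<n. x i) = 2 * of_int k}"

definition half8 :: "nat \<Rightarrow> real" where
  "half8 = (\<lambda>i. if i < 8 then 1/2 else 0)"

definition E8_lattice :: "(nat \<Rightarrow> real) set" where
  "E8_lattice = D_lattice 8 \<union> (\<lambda>x. vadd x half8) ` D_lattice 8"

text \<open>E7: orthogonal complement in E8 of the root half8.\<close>
definition E7_lattice :: "(nat \<Rightarrow> real) set" where
  "E7_lattice = {x \<in> E8_lattice. ip 8 x half8 = 0}"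

text \<open>E6: orthogonal complement in E8 of the A2 spanned by the roots half8 and -e1-e2.\<close>
definition E6_lattice :: "(nat \<Rightarrow> real) set" where
  "E6_lattice = {x \<in> E7_lattice. ip 8 x (\<lambda>i. if i < 2 then -1 else 0) = 0}"

fun rt_dim :: "root_type \<Rightarrow> nat" where
  "rt_dim (TypeA n) = n + 1"
| "rt_dim (TypeD n) = n"
| "rt_dim TypeE6 = 8"
| "rt_dim TypeE7 = 8"
| "rt_dim TypeE8 = 8"

fun root_lattice :: "root_type \<Rightarrow> (nat \<Rightarrow> real) set" where
  "root_lattice (TypeA n) = A_lattice n"
| "root_lattice (TypeD n) = D_lattice n"
| "root_lattice TypeE6 = E6_lattice"
| "root_lattice TypeE7 = E7_lattice"
| "root_lattice TypeE8 = E8_lattice"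

fun valid_type :: "root_type \<Rightarrow> bool" where
  "valid_type (TypeA n) = (n \<ge> 1)"
| "valid_type (TypeD n) = (n \<ge> 4)"
| "valid_type TypeE6 = True"
| "valid_type TypeE7 = True"
| "valid_type TypeE8 = True"

fun coxeter_number :: "root_type \<Rightarrow> nat" where
  "coxeter_number (TypeA n) = n + 1"
| "coxeter_number (TypeD n) = 2 * n - 2"
| "coxeter_number TypeE6 = 12"
| "coxeter_number TypeE7 = 18"
| "coxeter_number TypeE8 = 30"

text \<open>Q \<otimes>_Z R, realised inside the ambient space as the rational span of R.\<close>
definition rat_span :: "(nat \<Rightarrow> real) set \<Rightarrow> (nat \<Rightarrow> real) set" where
  "rat_span S = {v. \<exists>F c. finite F \<and> F \<subseteq> S \<and> (\<forall>r\<in>F. c r \<in> \<rat>) \<and>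
                         v = (\<lambda>i. \<Sum>r\<in>F. c r * r i)}"

definition dual_lattice :: "root_type \<Rightarrow> (nat \<Rightarrow> real) set" where
  "dual_lattice t = {v \<in> rat_span (root_lattice t).
                      \<forall>r\<in>root_lattice t. ip (rt_dim t) v r \<in> \<int>}"

definition coset :: "(nat \<Rightarrow> real) \<Rightarrow> (nat \<Rightarrow> real) set \<Rightarrow> (nat \<Rightarrow> real) set" where
  "coset g L = (\<lambda>a. vadd g a) ` L"

definition X_set :: "root_type \<Rightarrow> (nat \<Rightarrow> real) \<Rightarrow> real \<Rightarrow> (nat \<Rightarrow> real)
                     \<Rightarrow> ((nat \<Rightarrow> real) \<times> (nat \<Rightarrow> real)) set" where
  "X_set t g k eta = {(a, b). a \<in> root_lattice t \<and> b \<in> coset g (root_lattice t) \<and>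
       ip (rt_dim t) a a = 2 \<and> ip (rt_dim t) b b = k \<and> vadd a b = eta}"

end

theory Submission
  imports Defs
begin


lemma ip_add_left: "ip m (vadd a b) c = ip m a c + ip m b c"
  by (simp add: ip_def vadd_def sum.distrib algebra_simps)
lemma ip_sym: "ip m a b = ip m b a"
  by (simp add: ip_def mult.commute)
lemma ip_neg_left: "ip m (\<lambda>i. - a i) b = - ip m a b"
  by (simp add: ip_def sum_negf)
lemma ip_neg_right: "ip m a (\<lambda>i. - b i) = - ip m a b"
  by (simp add: ip_def sum_negf)
lemma ip_nonneg: "ip m x x \<ge> 0"
  by (simp add: ip_def sum_nonneg)
lemma ip_diff_sq: "ip m (\<lambda>i. x i - y i) (\<lambda>i. x i - y i) = ip m x x - 2 * ip m x y + ip m y y"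
proof -
  have "ip m (\<lambda>i. x i - y i) (\<lambda>i. x i - y i) = (\<Sum>i<m. x i * x i - 2 * (x i * y i) + y i * y i)"
    unfolding ip_def by (rule sum.cong) (simp_all add: algebra_simps)
  then show ?thesis by (simp add: ip_def sum.distrib sum_subtractf sum_distrib_left)
qed
lemma ip_add_sq: "ip m (vadd x y) (vadd x y) = ip m x x + 2 * ip m x y + ip m y y"
proof -
  have "ip m (vadd x y) (vadd x y) = (\<Sum>i<m. x i * x i + 2 * (x i * y i) + y i * y i)"
    unfolding ip_def vadd_def by (rule sum.cong) (simp_all add: algebra_simps)
  then show ?thesis by (simp add: ip_def sum.distrib sum_distrib_left)
qed

lemma ints_cases3:
  fixes z :: real assumes "z \<in> \<int>" "-1 \<le> z" "z \<le> 1" shows "z = -1 \<or> z = 0 \<or> z = 1"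
proof -
  obtain n :: int where "z = of_int n" using assms(1) Ints_cases by blast
  with assms have "n \<in> {-1,0,1}" by auto
  with \<open>z = of_int n\<close> show ?thesis by auto
qed

lemma main_generic:
  fixes m :: nat and L :: "(nat\<Rightarrow>real) set" and h k :: real and C :: "(nat\<Rightarrow>real) \<Rightarrow> bool"
  assumes cadd: "\<forall>a\<in>L. \<forall>b\<in>L. vadd a b \<in> L"
    and cneg: "\<forall>a\<in>L. (\<lambda>i. - a i) \<in> L"
    and integral: "\<forall>a\<in>L. \<forall>b\<in>L. ip m a b \<in> \<int>"
    and fin: "finite {a\<in>L. ip m a a = 2}"
    and sumid: "\<forall>x. C x \<longrightarrow> (\<Sum>a\<in>{a\<in>L. ip m a a = 2}. (ip m x a)^2) = 2*h*ip m x x"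
    and Ceta: "C eta"
    and g: "\<forall>r\<in>L. ip m g r \<in> \<int>"
    and k: "k = Inf ((\<lambda>a. ip m a a) ` coset g L)"
    and eta: "eta \<in> coset g L" and etak: "ip m eta eta = k"
  shows "real (card {(a,b). a \<in> L \<and> b \<in> coset g L \<and> ip m a a = 2 \<and> ip m b b = k \<and> vadd a b = eta}) = k*h"
proof -
  define \<Phi> where "\<Phi> = {a\<in>L. ip m a a = 2}"
  obtain r0 where r0: "r0 \<in> L" "eta = vadd g r0" using eta unfolding coset_def by auto
  have lower: "k \<le> ip m b b" if "b \<in> coset g L" for b
    unfolding k
    by (rule cInf_lower) (use that ip_nonneg in \<open>auto intro!: bdd_belowI[where m=0]\<close>)
  have int: "ip m eta a \<in> \<int>" if "a \<in> \<Phi>" for a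
    using that r0 g integral by (auto simp: \<Phi>_def ip_add_left)
  have minus_in: "(\<lambda>i. eta i - a i) \<in> coset g L" if "a \<in> L" for a
  proof -
    have "vadd r0 (\<lambda>i. - a i) \<in> L" using cadd cneg r0 that by blast
    moreover have "(\<lambda>i. eta i - a i) = vadd g (vadd r0 (\<lambda>i. - a i))"
      by (simp add: r0 vadd_def algebra_simps)
    ultimately show ?thesis unfolding coset_def by blast
  qed
  have plus_in: "vadd eta a \<in> coset g L" if "a \<in> L" for a
  proof -
    have "vadd r0 a \<in> L" using cadd r0 that by blast
    moreover have "vadd eta a = vadd g (vadd r0 a)"
      by (simp add: r0 vadd_def algebra_simps)
    ultimately show ?thesis unfolding coset_def by blast
  qed
  have vals: "ip m eta a = -1 \<or> ip m eta a = 0 \<or> ip m eta a = 1" if "a \<in> \<Phi>" for a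
  proof -
    have aL: "a \<in> L" "ip m a a = 2" using that by (auto simp: \<Phi>_def)
    have "k \<le> ip m (\<lambda>i. eta i - a i) (\<lambda>i. eta i - a i)" using lower minus_in aL by blast
    then have "ip m eta a \<le> 1" using etak aL by (simp add: ip_diff_sq)
    moreover have "k \<le> ip m (vadd eta a) (vadd eta a)" using lower plus_in aL by blast
    then have "-1 \<le> ip m eta a" using etak aL by (simp add: ip_add_sq)
    ultimately show ?thesis using ints_cases3 int that by blast
  qed
  define P1 where "P1 = {a\<in>\<Phi>. ip m eta a = 1}"
  define Pm where "Pm = {a\<in>\<Phi>. ip m eta a = -1}"
  have finP: "finite P1" "finite Pm" using fin by (auto simp: P1_def Pm_def \<Phi>_def intro: finite_subset[OF _ fin])
  have negPm: "(\<lambda>a i. - a i) ` P1 = Pm"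
  proof
    show "(\<lambda>a i. - a i) ` P1 \<subseteq> Pm"
      using cneg by (auto simp: P1_def Pm_def \<Phi>_def ip_neg_left ip_neg_right ip_sym[of m eta])
  next
    show "Pm \<subseteq> (\<lambda>a i. - a i) ` P1"
    proof
      fix a assume "a \<in> Pm"
      then have A: "(\<lambda>i. - a i) \<in> P1"
        using cneg by (auto simp: P1_def Pm_def \<Phi>_def ip_neg_left ip_neg_right ip_sym[of m eta])
      show "a \<in> (\<lambda>a i. - a i) ` P1"
      proof (rule image_eqI[of a "\<lambda>a i. - a i" "\<lambda>i. - a i"])
        show "a = (\<lambda>i. - (- a i))" by simp
      qed fact
    qed
  qed
  have injneg: "inj_on (\<lambda>a i. - a i) P1"
    by (rule inj_onI) (simp add: fun_eq_iff)
  have cardeq: "card Pm = card P1" using card_image[OF injneg] negPm by simp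
  have "(\<Sum>a\<in>\<Phi>. (ip m eta a)^2) = (\<Sum>a\<in>\<Phi>. of_bool (a \<in> P1) + of_bool (a \<in> Pm))"
  proof (rule sum.cong)
    fix a assume "a \<in> \<Phi>" then show "(ip m eta a)^2 = of_bool (a \<in> P1) + of_bool (a \<in> Pm)"
      using vals[of a] by (auto simp: P1_def Pm_def)
  qed simp
  also have "\<dots> = real (card (\<Phi> \<inter> {a. a \<in> P1})) + real (card (\<Phi> \<inter> {a. a \<in> Pm}))"
    using fin unfolding \<Phi>_def[symmetric] by (simp only: sum.distrib sum_of_bool_eq)
  also have "\<Phi> \<inter> {a. a \<in> P1} = P1" unfolding P1_def by blast
  also have "\<Phi> \<inter> {a. a \<in> Pm} = Pm" unfolding Pm_def by blast
  finally have "2*h*k = 2 * real (card P1)" using sumid Ceta etak cardeq by (simp add: \<Phi>_def)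
  then have cP1: "real (card P1) = k*h" by (simp add: mult.commute)
  have Xeq: "{(a,b). a \<in> L \<and> b \<in> coset g L \<and> ip m a a = 2 \<and> ip m b b = k \<and> vadd a b = eta}
           = (\<lambda>a. (a, \<lambda>i. eta i - a i)) ` P1"
  proof (rule set_eqI, rule iffI)
    fix p assume "p \<in> {(a,b). a \<in> L \<and> b \<in> coset g L \<and> ip m a a = 2 \<and> ip m b b = k \<and> vadd a b = eta}"
    then obtain a b where p: "p = (a,b)" "a \<in> L" "ip m a a = 2" "ip m b b = k" "vadd a b = eta" by auto
    have b: "b = (\<lambda>i. eta i - a i)" using p(5) by (auto simp: vadd_def)
    have "ip m eta a = 1" using p(3,4) etak b by (simp add: ip_diff_sq)
    then show "p \<in> (\<lambda>a. (a, \<lambda>i. eta i - a i)) ` P1" using p b by (auto simp: P1_def \<Phi>_def)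
  next
    fix p assume "p \<in> (\<lambda>a. (a, \<lambda>i. eta i - a i)) ` P1"
    then obtain a where a: "a \<in> L" "ip m a a = 2" "ip m eta a = 1" "p = (a, \<lambda>i. eta i - a i)"
      by (auto simp: P1_def \<Phi>_def)
    then show "p \<in> {(a,b). a \<in> L \<and> b \<in> coset g L \<and> ip m a a = 2 \<and> ip m b b = k \<and> vadd a b = eta}"
      using minus_in etak by (auto simp: ip_diff_sq vadd_def)
  qed
  have "inj_on (\<lambda>a. (a, \<lambda>i. eta i - a i)) P1" by (rule inj_onI) auto
  then show ?thesis using Xeq card_image cP1 by metis
qed


definition ev :: "nat \<Rightarrow> nat \<Rightarrow> real" where "ev i = (\<lambda>l. if l = i then 1 else 0)"
definition dv :: "(nat \<times> nat) \<times> (real \<times> real) \<Rightarrow> nat \<Rightarrow> real" where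
  "dv p = (case p of ((i,j),(s,t)) \<Rightarrow> (\<lambda>l. s * ev i l + t * ev j l))"
definition QP :: "nat \<Rightarrow> (nat \<times> nat) set" where "QP n = {(i,j). i < j \<and> j < n}"
definition DP :: "nat \<Rightarrow> ((nat \<times> nat) \<times> (real \<times> real)) set" where
  "DP n = QP n \<times> ({1,-1} \<times> {1,-1})"
definition av :: "nat \<times> nat \<Rightarrow> nat \<Rightarrow> real" where
  "av p = (case p of (i,j) \<Rightarrow> (\<lambda>l. ev i l - ev j l))"
definition AP :: "nat set \<Rightarrow> (nat \<times> nat) set" where
  "AP I = {(i,j). i \<in> I \<and> j \<in> I \<and> i \<noteq> j}"

lemma ip_ev: "j < m \<Longrightarrow> ip m x (ev j) = x j"
  by (simp add: ip_def ev_def if_distrib cong: if_cong)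

lemma ip_lin2: "ip m x (\<lambda>l. s * a l + t * b l) = s * ip m x a + t * ip m x b"
  by (simp add: ip_def sum.distrib sum_distrib_left algebra_simps)
lemma ip_diff2: "ip m x (\<lambda>l. a l - b l) = ip m x a - ip m x b"
  by (simp add: ip_def sum_subtractf algebra_simps)

lemma ip_dv: "i < m \<Longrightarrow> j < m \<Longrightarrow> ip m x (dv ((i,j),(s,t))) = s * x i + t * x j"
  by (simp add: dv_def ip_lin2 ip_ev)
lemma ip_av: "i < m \<Longrightarrow> j < m \<Longrightarrow> ip m x (av (i,j)) = x i - x j"
  by (simp add: av_def ip_diff2 ip_ev)

lemma int_sq_le2:
  fixes z :: real assumes "z \<in> \<int>" "z * z \<le> 2" shows "z = -1 \<or> z = 0 \<or> z = 1"
proof -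
  obtain n :: int where n: "z = of_int n" using assms(1) Ints_cases by blast
  have "of_int (n*n) \<le> (2::real)" using assms(2) n by simp
  then have "n * n \<le> 2" by linarith
  have a: "\<not> (2 \<le> n)"
  proof
    assume "2 \<le> n"
    then have "2 * 2 \<le> n * n" by (intro mult_mono) auto
    with \<open>n * n \<le> 2\<close> show False by simp
  qed
  have b: "\<not> (n \<le> -2)"
  proof
    assume "n \<le> -2"
    then have "2 * 2 \<le> (-n) * (-n)" by (intro mult_mono) auto
    with \<open>n * n \<le> 2\<close> show False by simp
  qed
  from a b have "n \<in> {-1,0,1}" by auto
  then show ?thesis using n by auto
qed

lemma int_norm2:
  assumes x: "x \<in> int_vecs m" and n2: "ip m x x = 2"
  shows "\<exists>p\<in>DP m. x = dv p"
proof -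
  have xi: "\<And>i. i < m \<Longrightarrow> x i \<in> \<int>" and xo: "\<And>i. i \<ge> m \<Longrightarrow> x i = 0"
    using x by (auto simp: int_vecs_def)
  have le: "x i * x i \<le> 2" if "i < m" for i
  proof -
    have "x i * x i \<le> (\<Sum>l<m. x l * x l)"
      by (rule member_le_sum) (use that in auto)
    then show ?thesis using n2 by (simp add: ip_def)
  qed
  have v3: "x i = -1 \<or> x i = 0 \<or> x i = 1" if "i < m" for i
    using int_sq_le2[OF xi[OF that] le[OF that]] .
  define S where "S = {i. i < m \<and> x i \<noteq> 0}"
  have "(\<Sum>l<m. x l * x l) = (\<Sum>l<m. of_bool (x l \<noteq> 0))"
  proof (rule sum.cong)
    fix l assume "l \<in> {..<m}"
    then show "x l * x l = of_bool (x l \<noteq> 0)" using v3[of l] by auto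
  qed simp
  also have "\<dots> = real (card ({..<m} \<inter> {l. x l \<noteq> 0}))" by simp
  also have "{..<m} \<inter> {l. x l \<noteq> 0} = S" by (auto simp: S_def)
  finally have "real (card S) = 2" using n2 by (simp add: ip_def)
  then have "card S = 2" by simp
  then obtain p q where pq: "S = {p,q}" "p \<noteq> q" by (auto simp: card_2_iff)
  define i where "i = min p q"
  define j where "j = max p q"
  have ij: "i < j" "S = {i,j}" using pq by (auto simp: i_def j_def)
  have "i \<in> S" "j \<in> S" using ij by auto
  then have ijm: "i < m" "j < m" and nz: "x i \<noteq> 0" "x j \<noteq> 0" by (auto simp: S_def)
  have s: "x i \<in> {1,-1}" "x j \<in> {1,-1}" using v3[OF ijm(1)] v3[OF ijm(2)] nz by auto
  have "x = dv ((i, j), (x i, x j))"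
  proof (rule ext)
    fix l
    show "x l = dv ((i, j), (x i, x j)) l"
    proof (cases "l = i \<or> l = j")
      case True then show ?thesis using ij by (auto simp: dv_def ev_def)
    next
      case False
      then have "l \<notin> S" using ij by auto
      then have "x l = 0" using xo by (cases "l < m") (auto simp: S_def)
      then show ?thesis using False by (auto simp: dv_def ev_def)
    qed
  qed
  moreover have "((i, j), (x i, x j)) \<in> DP m" using ij ijm s by (auto simp: DP_def QP_def)
  ultimately show ?thesis by blast
qed

lemma dv_in_int: "p \<in> DP m \<Longrightarrow> dv p \<in> int_vecs m"
  by (auto simp: DP_def QP_def dv_def ev_def int_vecs_def)

lemma dv_norm: "p \<in> DP m \<Longrightarrow> ip m (dv p) (dv p) = 2"
proof -
  assume "p \<in> DP m"
  then obtain i j s t where p: "p = ((i,j),(s,t))" "i < j" "j < m" "s \<in> {1,-1}" "t \<in> {1,-1}"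
    by (auto simp: DP_def QP_def)
  have "ip m (dv p) (dv p) = s * s + t * t"
    using p by (simp add: ip_dv) (simp add: dv_def ev_def)
  then show ?thesis using p by auto
qed

lemma dv_sum: "p \<in> DP m \<Longrightarrow> (\<Sum>l<m. dv p l) = fst (snd p) + snd (snd p)"
proof -
  assume "p \<in> DP m"
  then obtain i j s t where p: "p = ((i,j),(s,t))" "i < j" "j < m" by (auto simp: DP_def QP_def)
  have "(\<Sum>l<m. dv p l) = ip m (\<lambda>_. 1) (dv p)" by (simp add: ip_def)
  also have "\<dots> = s + t" using p by (simp add: ip_dv)
  finally show ?thesis using p by simp
qed

lemma dv_at: "i \<noteq> j \<Longrightarrow> dv ((i,j),(s,t)) l = (if l = i then s else if l = j then t else 0)"
  by (simp add: dv_def ev_def)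

lemma inj_dv: "inj_on dv (DP m)"
proof (rule inj_onI)
  fix p q assume p: "p \<in> DP m" and q: "q \<in> DP m" and e: "dv p = dv q"
  obtain i j s t where P: "p = ((i,j),(s,t))" "i < j" "s \<noteq> 0" "t \<noteq> 0" using p by (auto simp: DP_def QP_def)
  obtain i' j' s' t' where Q: "q = ((i',j'),(s',t'))" "i' < j'" "s' \<noteq> 0" "t' \<noteq> 0" using q by (auto simp: DP_def QP_def)
  have f: "\<And>l. dv ((i,j),(s,t)) l = dv ((i',j'),(s',t')) l" using e P Q by simp
  have fi: "\<And>l. (if l = i then s else if l = j then t else 0) = (if l = i' then s' else if l = j' then t' else 0)"
    using f P(2) Q(2) by (simp add: dv_at)
  have 1: "i \<in> {i',j'}" using fi[of i] P by (auto split: if_splits)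
  have 2: "i' \<in> {i,j}" using fi[of i'] Q by (auto split: if_splits)
  have 3: "j \<in> {i',j'}" using fi[of j] P by (auto split: if_splits)
  have 4: "j' \<in> {i,j}" using fi[of j'] Q by (auto split: if_splits)
  have a: "i = i'" "j = j'" using 1 2 3 4 P(2) Q(2) by auto
  have "s = s'" using fi[of i] a by simp
  moreover have "t = t'" using fi[of j] a P(2) by simp
  ultimately show "p = q" using P Q a by simp
qed

lemma finite_DP: "finite (DP m)"
proof -
  have "QP m \<subseteq> {..<m} \<times> {..<m}" by (auto simp: QP_def)
  then have "finite (QP m)" by (rule finite_subset) auto
  then show ?thesis by (simp add: DP_def)
qed

lemma D_roots: "{a \<in> D_lattice n. ip n a a = 2} = dv ` DP n"
proof
  show "{a \<in> D_lattice n. ip n a a = 2} \<subseteq> dv ` DP n"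
    using int_norm2 by (auto simp: D_lattice_def)
next
  show "dv ` DP n \<subseteq> {a \<in> D_lattice n. ip n a a = 2}"
  proof
    fix a assume "a \<in> dv ` DP n"
    then obtain p where p: "p \<in> DP n" "a = dv p" by auto
    obtain i j s t where P: "p = ((i,j),(s,t))" "s \<in> {1,-1}" "t \<in> {1,-1}" using p by (auto simp: DP_def QP_def)
    have "\<exists>k::int. s + t = 2 * of_int k"
      using P(2,3) by (auto intro: exI[where x=1] exI[where x=0] exI[where x="-1"])
    then show "a \<in> {a \<in> D_lattice n. ip n a a = 2}"
      using p dv_in_int[OF p(1)] dv_norm[OF p(1)] dv_sum[OF p(1)] P by (auto simp: D_lattice_def)
  qed
qed


lemma A_roots: "{a \<in> A_lattice n. ip (n+1) a a = 2} = av ` AP {..<n+1}"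
proof
  show "{a \<in> A_lattice n. ip (n+1) a a = 2} \<subseteq> av ` AP {..<n+1}"
  proof
    fix a assume a: "a \<in> {a \<in> A_lattice n. ip (n+1) a a = 2}"
    then have ai: "a \<in> int_vecs (n+1)" "(\<Sum>i<n+1. a i) = 0" "ip (n+1) a a = 2"
      by (auto simp: A_lattice_def)
    obtain p where p: "p \<in> DP (n+1)" "a = dv p" using int_norm2[OF ai(1) ai(3)] by blast
    obtain i j s t where P: "p = ((i,j),(s,t))" "i < j" "j < n+1" "s \<in> {1,-1}" "t \<in> {1,-1}"
      using p by (auto simp: DP_def QP_def)
    have "s + t = 0" using dv_sum[OF p(1)] ai(2) p P by simp
    then consider "s = 1" "t = -1" | "s = -1" "t = 1" using P by auto
    then show "a \<in> av ` AP {..<n+1}"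
    proof cases
      case 1
      then have "a = av (i,j)" using p P by (simp add: dv_def av_def fun_eq_iff)
      moreover have "(i,j) \<in> AP {..<n+1}" using P by (auto simp: AP_def)
      ultimately show ?thesis by blast
    next
      case 2
      then have "a = av (j,i)" using p P by (simp add: dv_def av_def fun_eq_iff)
      moreover have "(j,i) \<in> AP {..<n+1}" using P by (auto simp: AP_def)
      ultimately show ?thesis by blast
    qed
  qed
next
  show "av ` AP {..<n+1} \<subseteq> {a \<in> A_lattice n. ip (n+1) a a = 2}"
  proof
    fix a assume "a \<in> av ` AP {..<n+1}"
    then obtain i j where ij: "i < n+1" "j < n+1" "i \<noteq> j" "a = av (i,j)" by (auto simp: AP_def)
    have "a \<in> int_vecs (n+1)" using ij by (auto simp: int_vecs_def av_def ev_def)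
    moreover have "(\<Sum>l<n+1. a l) = ip (n+1) (\<lambda>_. 1) a" by (simp add: ip_def)
    moreover have "ip (n+1) (\<lambda>_. 1) a = 0" using ij by (simp add: ip_av)
    moreover have "ip (n+1) a a = a i - a j" using ij by (simp add: ip_av)
    moreover have "a i = 1" "a j = -1" using ij by (auto simp: av_def ev_def)
    ultimately show "a \<in> {a \<in> A_lattice n. ip (n+1) a a = 2}" by (simp add: A_lattice_def)
  qed
qed

lemma inj_av: "inj_on av (AP I)"
proof (rule inj_onI)
  fix p q assume p: "p \<in> AP I" and q: "q \<in> AP I" and e: "av p = av q"
  obtain i j where P: "p = (i,j)" "i \<noteq> j" using p by (auto simp: AP_def)
  obtain i' j' where Q: "q = (i',j')" "i' \<noteq> j'" using q by (auto simp: AP_def)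
  have f: "\<And>l. av (i,j) l = av (i',j') l" using e P Q by simp
  have "i = i'" using f[of i] P Q by (auto simp: av_def ev_def split: if_splits)
  moreover have "j = j'" using f[of j] P Q by (auto simp: av_def ev_def split: if_splits)
  ultimately show "p = q" using P Q by simp
qed

lemma finite_AP: "finite I \<Longrightarrow> finite (AP I)"
  by (rule finite_subset[of _ "I \<times> I"]) (auto simp: AP_def)

lemma SA:
  assumes fin: "finite I" and sub: "I \<subseteq> {..<m}"
  shows "(\<Sum>a\<in>av ` AP I. (ip m x a)^2) = 2 * real (card I) * (\<Sum>i\<in>I. (x i)^2) - 2 * (\<Sum>i\<in>I. x i)^2"
proof -
  have "(\<Sum>a\<in>av ` AP I. (ip m x a)^2) = (\<Sum>p\<in>AP I. (ip m x (av p))^2)"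
    by (rule sum.reindex[OF inj_av, unfolded comp_def])
  also have "\<dots> = (\<Sum>p\<in>AP I. (x (fst p) - x (snd p))^2)"
  proof (rule sum.cong)
    fix p assume "p \<in> AP I"
    then obtain a b where "p = (a,b)" "a \<in> I" "b \<in> I" by (auto simp: AP_def)
    moreover have "a < m" "b < m" using \<open>a \<in> I\<close> \<open>b \<in> I\<close> sub by auto
    ultimately show "(ip m x (av p))^2 = (x (fst p) - x (snd p))^2" by (simp add: ip_av)
  qed simp
  also have "\<dots> = (\<Sum>p\<in>I \<times> I. (x (fst p) - x (snd p))^2)"
    by (rule sum.mono_neutral_left) (use fin in \<open>auto simp: AP_def\<close>)
  also have "\<dots> = (\<Sum>i\<in>I. \<Sum>j\<in>I. (x i - x j)^2)"
    by (subst sum.cartesian_product') simp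
  also have "\<dots> = (\<Sum>i\<in>I. \<Sum>j\<in>I. (x i)^2 + (x j)^2 - 2 * (x i * x j))"
    by (simp add: power2_diff mult.assoc)
  also have "\<dots> = (\<Sum>i\<in>I. real (card I) * (x i)^2 + (\<Sum>j\<in>I. (x j)^2) - 2 * (x i * (\<Sum>j\<in>I. x j)))"
    by (simp add: sum.distrib sum_subtractf sum_distrib_left)
  also have "\<dots> = 2 * real (card I) * (\<Sum>i\<in>I. (x i)^2) - 2 * (\<Sum>i\<in>I. x i)^2"
    by (simp add: sum.distrib sum_subtractf sum_distrib_left sum_distrib_right power2_eq_square algebra_simps)
  finally show ?thesis .
qed

lemma QP_Suc: "QP (Suc n) = QP n \<union> (\<lambda>i. (i,n)) ` {..<n}"
  by (auto simp: QP_def)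

lemma sum_QP: "(\<Sum>p\<in>QP n. f (fst p) + f (snd p)) = (real n - 1) * (\<Sum>i<n. f i)"
proof (induction n)
  case 0 then show ?case by (simp add: QP_def)
next
  case (Suc n)
  have fin: "finite (QP n)" by (rule finite_subset[of _ "{..<n} \<times> {..<n}"]) (auto simp: QP_def)
  have disj: "QP n \<inter> (\<lambda>i. (i,n)) ` {..<n} = {}" by (auto simp: QP_def)
  have inj: "inj_on (\<lambda>i. (i,n)) {..<n}" by (auto simp: inj_on_def)
  have "(\<Sum>p\<in>QP (Suc n). f (fst p) + f (snd p)) = (\<Sum>p\<in>QP n. f (fst p) + f (snd p)) + (\<Sum>i<n. f i + f n)"
    unfolding QP_Suc by (subst sum.union_disjoint) (use fin disj in \<open>auto simp: sum.reindex[OF inj]\<close>)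
  also have "\<dots> = (real n - 1) * (\<Sum>i<n. f i) + (\<Sum>i<n. f i) + real n * f n"
    using Suc by (simp add: sum.distrib)
  also have "\<dots> = (real (Suc n) - 1) * (\<Sum>i<Suc n. f i)"
    by (simp add: algebra_simps)
  finally show ?case .
qed

lemma SD: "(\<Sum>a\<in>dv ` DP n. (ip n x a)^2) = 4 * (real n - 1) * ip n x x"
proof -
  have "(\<Sum>a\<in>dv ` DP n. (ip n x a)^2) = (\<Sum>p\<in>DP n. (ip n x (dv p))^2)"
    by (rule sum.reindex[OF inj_dv, unfolded comp_def])
  also have "\<dots> = (\<Sum>q\<in>QP n. \<Sum>st\<in>{1,-1::real} \<times> {1,-1::real}. (ip n x (dv (q,st)))^2)"
    unfolding DP_def by (rule sum.cartesian_product')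
  also have "\<dots> = (\<Sum>q\<in>QP n. 4 * ((x (fst q))^2 + (x (snd q))^2))"
  proof (rule sum.cong)
    fix q assume "q \<in> QP n"
    then obtain i j where q: "q = (i,j)" "i < j" "j < n" by (auto simp: QP_def)
    have "(\<Sum>st\<in>{1,-1::real} \<times> {1,-1::real}. (ip n x (dv (q,st)))^2)
        = (\<Sum>s\<in>{1,-1::real}. \<Sum>t\<in>{1,-1::real}. (s * x i + t * x j)^2)"
    proof -
      have "i < n" using q by simp
      then show ?thesis unfolding sum.cartesian_product' using q by (simp add: ip_dv)
    qed
    also have "\<dots> = 4 * ((x i)^2 + (x j)^2)" by (simp add: power2_eq_square algebra_simps)
    finally show "(\<Sum>st\<in>{1,-1::real} \<times> {1,-1::real}. (ip n x (dv (q,st)))^2) = 4 * ((x (fst q))^2 + (x (snd q))^2)"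
      using q by simp
  qed simp
  also have "\<dots> = 4 * (real n - 1) * (\<Sum>i<n. (x i)^2)"
    by (simp only: sum_distrib_left[symmetric] sum_QP[of "\<lambda>i. (x i)^2"] mult.assoc)
  finally show ?thesis by (simp add: ip_def power2_eq_square)
qed


lemma ratspan_orth:
  assumes v: "v \<in> rat_span S" and o: "\<forall>r\<in>S. ip m r y = 0"
  shows "ip m v y = 0"
proof -
  obtain F c where F: "finite F" "F \<subseteq> S" "v = (\<lambda>i. \<Sum>r\<in>F. c r * r i)"
    using v unfolding rat_span_def by blast
  have "ip m v y = (\<Sum>i<m. \<Sum>r\<in>F. c r * r i * y i)"
    by (simp add: ip_def F(3) sum_distrib_right)
  also have "\<dots> = (\<Sum>r\<in>F. c r * ip m r y)"
    by (subst sum.swap) (simp add: ip_def sum_distrib_left mult.assoc)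
  also have "\<dots> = 0" using F(2) o by (auto intro!: sum.neutral)
  finally show ?thesis .
qed

lemma eta_orth:
  assumes "eta \<in> coset g L" "g \<in> rat_span L" "\<forall>r\<in>L. ip m r y = 0"
  shows "ip m eta y = 0"
proof -
  obtain r0 where "r0 \<in> L" "eta = vadd g r0" using assms(1) unfolding coset_def by auto
  then show ?thesis using ratspan_orth[OF assms(2,3)] assms(3) by (simp add: ip_add_left)
qed

lemma int_vecs_add: "a \<in> int_vecs m \<Longrightarrow> b \<in> int_vecs m \<Longrightarrow> vadd a b \<in> int_vecs m"
  by (auto simp: int_vecs_def vadd_def)
lemma int_vecs_neg: "a \<in> int_vecs m \<Longrightarrow> (\<lambda>i. - a i) \<in> int_vecs m"
  by (auto simp: int_vecs_def)
lemma int_vecs_ip: "a \<in> int_vecs m \<Longrightarrow> b \<in> int_vecs m \<Longrightarrow> ip m a b \<in> \<int>"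
  unfolding ip_def int_vecs_def by (intro Ints_sum) auto

lemma sum_vadd: "(\<Sum>i<m. vadd a b i) = (\<Sum>i<m. a i) + (\<Sum>i<m. b i)"
  by (simp add: vadd_def sum.distrib)

lemma A_closed: "\<forall>a\<in>A_lattice n. \<forall>b\<in>A_lattice n. vadd a b \<in> A_lattice n"
proof (intro ballI)
  fix a b assume a: "a \<in> A_lattice n" and b: "b \<in> A_lattice n"
  have "(\<Sum>i<n+1. vadd a b i) = (\<Sum>i<n+1. a i) + (\<Sum>i<n+1. b i)" by (rule sum_vadd)
  then show "vadd a b \<in> A_lattice n" using a b unfolding A_lattice_def by (auto simp: int_vecs_add)
qed
lemma A_neg: "\<forall>a\<in>A_lattice n. (\<lambda>i. - a i) \<in> A_lattice n"
  by (auto simp: A_lattice_def int_vecs_neg sum_negf)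
lemma D_closed: "\<forall>a\<in>D_lattice n. \<forall>b\<in>D_lattice n. vadd a b \<in> D_lattice n"
proof (intro ballI)
  fix a b assume a: "a \<in> D_lattice n" and b: "b \<in> D_lattice n"
  obtain k1 :: int where "(\<Sum>i<n. a i) = 2 * of_int k1" using a by (auto simp: D_lattice_def)
  moreover obtain k2 :: int where "(\<Sum>i<n. b i) = 2 * of_int k2" using b by (auto simp: D_lattice_def)
  ultimately have "(\<Sum>i<n. vadd a b i) = 2 * of_int (k1 + k2)" by (simp add: sum_vadd)
  then have "\<exists>k::int. (\<Sum>i<n. vadd a b i) = 2 * of_int k" by (rule exI)
  moreover have "vadd a b \<in> int_vecs n" using a b by (auto simp: D_lattice_def int_vecs_add)
  ultimately show "vadd a b \<in> D_lattice n" by (simp add: D_lattice_def)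
qed
lemma D_neg: "\<forall>a\<in>D_lattice n. (\<lambda>i. - a i) \<in> D_lattice n"
proof
  fix a assume a: "a \<in> D_lattice n"
  obtain k1 :: int where "(\<Sum>i<n. a i) = 2 * of_int k1" using a by (auto simp: D_lattice_def)
  then have "(\<Sum>i<n. - a i) = 2 * of_int (- k1)" by (simp add: sum_negf)
  then have "\<exists>k::int. (\<Sum>i<n. - a i) = 2 * of_int k" by (rule exI)
  moreover have "(\<lambda>i. - a i) \<in> int_vecs n" using a by (auto simp: D_lattice_def int_vecs_neg)
  ultimately show "(\<lambda>i. - a i) \<in> D_lattice n" by (simp add: D_lattice_def)
qed

lemma dual_facts:
  assumes "g \<in> dual_lattice t"
  shows "g \<in> rat_span (root_lattice t)" "\<forall>r\<in>root_lattice t. ip (rt_dim t) g r \<in> \<int>"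
  using assms by (auto simp: dual_lattice_def)

lemma case_A:
  assumes "g \<in> dual_lattice (TypeA n)"
    and "k = Inf ((\<lambda>a. ip (rt_dim (TypeA n)) a a) ` coset g (root_lattice (TypeA n)))"
    and "eta \<in> coset g (root_lattice (TypeA n))"
    and "ip (rt_dim (TypeA n)) eta eta = k"
  shows "real (card (X_set (TypeA n) g k eta)) = k * real (coxeter_number (TypeA n))"
proof -
  note df = dual_facts[OF assms(1)]
  have fin: "finite {a \<in> A_lattice n. ip (n+1) a a = 2}"
    unfolding A_roots by (intro finite_imageI finite_AP) simp
  have sumid: "\<forall>x. ip (n+1) x (\<lambda>_. 1) = 0 \<longrightarrow>
     (\<Sum>a\<in>{a \<in> A_lattice n. ip (n+1) a a = 2}. (ip (n+1) x a)^2) = 2 * real (n+1) * ip (n+1) x x"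
  proof (intro allI impI)
    fix x assume "ip (n+1) x (\<lambda>_. 1) = 0"
    then have "(\<Sum>i<n+1. x i) = 0" by (simp add: ip_def)
    then show "(\<Sum>a\<in>{a \<in> A_lattice n. ip (n+1) a a = 2}. (ip (n+1) x a)^2) = 2 * real (n+1) * ip (n+1) x x"
      unfolding A_roots using SA[of "{..<n+1}" "n+1" x] by (simp add: ip_def power2_eq_square)
  qed
  have orth: "\<forall>r\<in>A_lattice n. ip (n+1) r (\<lambda>_. 1) = 0" by (auto simp: A_lattice_def ip_def)
  have Ceta: "ip (n+1) eta (\<lambda>_. 1) = 0"
    using eta_orth[of eta g "A_lattice n" "n+1"] assms(3) df(1) orth by simp
  have integral: "\<forall>a\<in>A_lattice n. \<forall>b\<in>A_lattice n. ip (n+1) a b \<in> \<int>"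
    by (auto simp: A_lattice_def int_vecs_ip)
  show ?thesis
    using main_generic[OF A_closed A_neg integral fin sumid, where eta=eta and g=g and k=k] Ceta df(2) assms(2-4)
    by (simp add: X_set_def)
qed

lemma case_D:
  assumes "n \<ge> 4" "g \<in> dual_lattice (TypeD n)"
    and "k = Inf ((\<lambda>a. ip (rt_dim (TypeD n)) a a) ` coset g (root_lattice (TypeD n)))"
    and "eta \<in> coset g (root_lattice (TypeD n))"
    and "ip (rt_dim (TypeD n)) eta eta = k"
  shows "real (card (X_set (TypeD n) g k eta)) = k * real (coxeter_number (TypeD n))"
proof -
  note df = dual_facts[OF assms(2)]
  have fin: "finite {a \<in> D_lattice n. ip n a a = 2}"
    unfolding D_roots by (intro finite_imageI finite_DP)
  have h: "real (2 * n - 2) = 2 * real n - 2" using assms(1) by (simp add: of_nat_diff)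
  have sumid: "\<forall>x. True \<longrightarrow>
     (\<Sum>a\<in>{a \<in> D_lattice n. ip n a a = 2}. (ip n x a)^2) = 2 * real (2 * n - 2) * ip n x x"
    unfolding D_roots h by (simp add: SD algebra_simps)
  have integral: "\<forall>a\<in>D_lattice n. \<forall>b\<in>D_lattice n. ip n a b \<in> \<int>"
    by (auto simp: D_lattice_def int_vecs_ip)
  show ?thesis
    using main_generic[OF D_closed D_neg integral fin sumid, where eta=eta and g=g and k=k] df(2) assms(3-5)
    by (simp add: X_set_def)
qed


definition EB8 :: "bool list list" where
 "EB8 = [[False, False, False, False, False, False, False, False],
  [True, True, False, False, False, False, False, False],
  [True, False, True, False, False, False, False, False],
  [False, True, True, False, False, False, False, False],
  [True, False, False, True, False, False, False, False],
  [False, True, False, True, False, False, False, False],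
  [False, False, True, True, False, False, False, False],
  [True, True, True, True, False, False, False, False],
  [True, False, False, False, True, False, False, False],
  [False, True, False, False, True, False, False, False],
  [False, False, True, False, True, False, False, False],
  [True, True, True, False, True, False, False, False],
  [False, False, False, True, True, False, False, False],
  [True, True, False, True, True, False, False, False],
  [True, False, True, True, True, False, False, False],
  [False, True, True, True, True, False, False, False],
  [True, False, False, False, False, True, False, False],
  [False, True, False, False, False, True, False, False],
  [False, False, True, False, False, True, False, False],
  [True, True, True, False, False, True, False, False],
  [False, False, False, True, False, True, False, False],
  [True, True, False, True, False, True, False, False],
  [True, False, True, True, False, True, False, False],
  [False, True, True, True, False, True, False, False],
  [False, False, False, False, True, True, False, False],
  [True, True, False, False, True, True, False, False],
  [True, False, True, False, True, True, False, False],
  [False, True, True, False, True, True, False, False],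
  [True, False, False, True, True, True, False, False],
  [False, True, False, True, True, True, False, False],
  [False, False, True, True, True, True, False, False],
  [True, True, True, True, True, True, False, False],
  [True, False, False, False, False, False, True, False],
  [False, True, False, False, False, False, True, False],
  [False, False, True, False, False, False, True, False],
  [True, True, True, False, False, False, True, False],
  [False, False, False, True, False, False, True, False],
  [True, True, False, True, False, False, True, False],
  [True, False, True, True, False, False, True, False],
  [False, True, True, True, False, False, True, False],
  [False, False, False, False, True, False, True, False],
  [True, True, False, False, True, False, True, False],
  [True, False, True, False, True, False, True, False],
  [False, True, True, False, True, False, True, False],
  [True, False, False, True, True, False, True, False],
  [False, True, False, True, True, False, True, False],
  [False, False, True, True, True, False, True, False],
  [True, True, True, True, True, False, True, False],
  [False, False, False, False, False, True, True, False],
  [True, True, False, False, False, True, True, False],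
  [True, False, True, False, False, True, True, False],
  [False, True, True, False, False, True, True, False],
  [True, False, False, True, False, True, True, False],
  [False, True, False, True, False, True, True, False],
  [False, False, True, True, False, True, True, False],
  [True, True, True, True, False, True, True, False],
  [True, False, False, False, True, True, True, False],
  [False, True, False, False, True, True, True, False],
  [False, False, True, False, True, True, True, False],
  [True, True, True, False, True, True, True, False],
  [False, False, False, True, True, True, True, False],
  [True, True, False, True, True, True, True, False],
  [True, False, True, True, True, True, True, False],
  [False, True, True, True, True, True, True, False],
  [True, False, False, False, False, False, False, True],
  [False, True, False, False, False, False, False, True],
  [False, False, True, False, False, False, False, True],
  [True, True, True, False, False, False, False, True],
  [False, False, False, True, False, False, False, True],
  [True, True, False, True, False, False, False, True],
  [True, False, True, True, False, False, False, True],
  [False, True, True, True, False, False, False, True],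
  [False, False, False, False, True, False, False, True],
  [True, True, False, False, True, False, False, True],
  [True, False, True, False, True, False, False, True],
  [False, True, True, False, True, False, False, True],
  [True, False, False, True, True, False, False, True],
  [False, True, False, True, True, False, False, True],
  [False, False, True, True, True, False, False, True],
  [True, True, True, True, True, False, False, True],
  [False, False, False, False, False, True, False, True],
  [True, True, False, False, False, True, False, True],
  [True, False, True, False, False, True, False, True],
  [False, True, True, False, False, True, False, True],
  [True, False, False, True, False, True, False, True],
  [False, True, False, True, False, True, False, True],
  [False, False, True, True, False, True, False, True],
  [True, True, True, True, False, True, False, True],
  [True, False, False, False, True, True, False, True],
  [False, True, False, False, True, True, False, True],
  [False, False, True, False, True, True, False, True],
  [True, True, True, False, True, True, False, True],
  [False, False, False, True, True, True, False, True],
  [True, True, False, True, True, True, False, True],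
  [True, False, True, True, True, True, False, True],
  [False, True, True, True, True, True, False, True],
  [False, False, False, False, False, False, True, True],
  [True, True, False, False, False, False, True, True],
  [True, False, True, False, False, False, True, True],
  [False, True, True, False, False, False, True, True],
  [True, False, False, True, False, False, True, True],
  [False, True, False, True, False, False, True, True],
  [False, False, True, True, False, False, True, True],
  [True, True, True, True, False, False, True, True],
  [True, False, False, False, True, False, True, True],
  [False, True, False, False, True, False, True, True],
  [False, False, True, False, True, False, True, True],
  [True, True, True, False, True, False, True, True],
  [False, False, False, True, True, False, True, True],
  [True, True, False, True, True, False, True, True],
  [True, False, True, True, True, False, True, True],
  [False, True, True, True, True, False, True, True],
  [True, False, False, False, False, True, True, True],
  [False, True, False, False, False, True, True, True],
  [False, False, True, False, False, True, True, True],
  [True, True, True, False, False, True, True, True],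
  [False, False, False, True, False, True, True, True],
  [True, True, False, True, False, True, True, True],
  [True, False, True, True, False, True, True, True],
  [False, True, True, True, False, True, True, True],
  [False, False, False, False, True, True, True, True],
  [True, True, False, False, True, True, True, True],
  [True, False, True, False, True, True, True, True],
  [False, True, True, False, True, True, True, True],
  [True, False, False, True, True, True, True, True],
  [False, True, False, True, True, True, True, True],
  [False, False, True, True, True, True, True, True],
  [True, True, True, True, True, True, True, True]]"

definition EB7 :: "bool list list" where
 "EB7 = [[True, True, True, True, False, False, False, False],
  [True, True, True, False, True, False, False, False],
  [True, True, False, True, True, False, False, False],
  [True, False, True, True, True, False, False, False],
  [False, True, True, True, True, False, False, False],
  [True, True, True, False, False, True, False, False],
  [True, True, False, True, False, True, False, False],
  [True, False, True, True, False, True, False, False],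
  [False, True, True, True, False, True, False, False],
  [True, True, False, False, True, True, False, False],
  [True, False, True, False, True, True, False, False],
  [False, True, True, False, True, True, False, False],
  [True, False, False, True, True, True, False, False],
  [False, True, False, True, True, True, False, False],
  [False, False, True, True, True, True, False, False],
  [True, True, True, False, False, False, True, False],
  [True, True, False, True, False, False, True, False],
  [True, False, True, True, False, False, True, False],
  [False, True, True, True, False, False, True, False],
  [True, True, False, False, True, False, True, False],
  [True, False, True, False, True, False, True, False],
  [False, True, True, False, True, False, True, False],
  [True, False, False, True, True, False, True, False],
  [False, True, False, True, True, False, True, False],
  [False, False, True, True, True, False, True, False],
  [True, True, False, False, False, True, True, False],
  [True, False, True, False, False, True, True, False],
  [False, True, True, False, False, True, True, False],
  [True, False, False, True, False, True, True, False],
  [False, True, False, True, False, True, True, False],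
  [False, False, True, True, False, True, True, False],
  [True, False, False, False, True, True, True, False],
  [False, True, False, False, True, True, True, False],
  [False, False, True, False, True, True, True, False],
  [False, False, False, True, True, True, True, False],
  [True, True, True, False, False, False, False, True],
  [True, True, False, True, False, False, False, True],
  [True, False, True, True, False, False, False, True],
  [False, True, True, True, False, False, False, True],
  [True, True, False, False, True, False, False, True],
  [True, False, True, False, True, False, False, True],
  [False, True, True, False, True, False, False, True],
  [True, False, False, True, True, False, False, True],
  [False, True, False, True, True, False, False, True],
  [False, False, True, True, True, False, False, True],
  [True, True, False, False, False, True, False, True],
  [True, False, True, False, False, True, False, True],
  [False, True, True, False, False, True, False, True],
  [True, False, False, True, False, True, False, True],
  [False, True, False, True, False, True, False, True],
  [False, False, True, True, False, True, False, True],
  [True, False, False, False, True, True, False, True],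
  [False, True, False, False, True, True, False, True],
  [False, False, True, False, True, True, False, True],
  [False, False, False, True, True, True, False, True],
  [True, True, False, False, False, False, True, True],
  [True, False, True, False, False, False, True, True],
  [False, True, True, False, False, False, True, True],
  [True, False, False, True, False, False, True, True],
  [False, True, False, True, False, False, True, True],
  [False, False, True, True, False, False, True, True],
  [True, False, False, False, True, False, True, True],
  [False, True, False, False, True, False, True, True],
  [False, False, True, False, True, False, True, True],
  [False, False, False, True, True, False, True, True],
  [True, False, False, False, False, True, True, True],
  [False, True, False, False, False, True, True, True],
  [False, False, True, False, False, True, True, True],
  [False, False, False, True, False, True, True, True],
  [False, False, False, False, True, True, True, True]]"

definition EB6 :: "bool list list" where
 "EB6 = [[True, False, True, True, True, False, False, False],
  [False, True, True, True, True, False, False, False],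
  [True, False, True, True, False, True, False, False],
  [False, True, True, True, False, True, False, False],
  [True, False, True, False, True, True, False, False],
  [False, True, True, False, True, True, False, False],
  [True, False, False, True, True, True, False, False],
  [False, True, False, True, True, True, False, False],
  [True, False, True, True, False, False, True, False],
  [False, True, True, True, False, False, True, False],
  [True, False, True, False, True, False, True, False],
  [False, True, True, False, True, False, True, False],
  [True, False, False, True, True, False, True, False],
  [False, True, False, True, True, False, True, False],
  [True, False, True, False, False, True, True, False],
  [False, True, True, False, False, True, True, False],
  [True, False, False, True, False, True, True, False],
  [False, True, False, True, False, True, True, False],
  [True, False, False, False, True, True, True, False],
  [False, True, False, False, True, True, True, False],
  [True, False, True, True, False, False, False, True],
  [False, True, True, True, False, False, False, True],
  [True, False, True, False, True, False, False, True],
  [False, True, True, False, True, False, False, True],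
  [True, False, False, True, True, False, False, True],
  [False, True, False, True, True, False, False, True],
  [True, False, True, False, False, True, False, True],
  [False, True, True, False, False, True, False, True],
  [True, False, False, True, False, True, False, True],
  [False, True, False, True, False, True, False, True],
  [True, False, False, False, True, True, False, True],
  [False, True, False, False, True, True, False, True],
  [True, False, True, False, False, False, True, True],
  [False, True, True, False, False, False, True, True],
  [True, False, False, True, False, False, True, True],
  [False, True, False, True, False, False, True, True],
  [True, False, False, False, True, False, True, True],
  [False, True, False, False, True, False, True, True],
  [True, False, False, False, False, True, True, True],
  [False, True, False, False, False, True, True, True]]"

lemma EB8_eq: "filter (\<lambda>bs. even (length (filter id bs))) (List.n_lists 8 [False, True]) = EB8"
  unfolding EB8_def by code_simp
lemma EB7_eq: "filter (\<lambda>bs. length (filter id bs) = 4) (List.n_lists 8 [False, True]) = EB7"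
  unfolding EB7_def by code_simp
lemma EB6_eq: "filter (\<lambda>bs. length (filter id bs) = 4 \<and> bs ! 0 \<noteq> bs ! 1) (List.n_lists 8 [False, True]) = EB6"
  unfolding EB6_def by code_simp
lemma EB8_cnt: "\<forall>i<8. \<forall>j<8. length (filter (\<lambda>bs. bs ! i = bs ! j) EB8) = (if i = j then 128 else 64)"
  unfolding EB8_def by code_simp
lemma EB7_cnt: "\<forall>i<8. \<forall>j<8. length (filter (\<lambda>bs. bs ! i = bs ! j) EB7) = (if i = j then 70 else 30)"
  unfolding EB7_def by code_simp
lemma EB6_cnt: "\<forall>i<8. \<forall>j<8. length (filter (\<lambda>bs. bs ! i = bs ! j) EB6) = (if i = j then 40 else if {i,j} = {0,1} then 0 else if i < 2 \<or> j < 2 then 20 else 16)"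
  unfolding EB6_def by code_simp
lemma EB_len: "length EB8 = 128" "length EB7 = 70" "length EB6 = 40"
  unfolding EB8_def EB7_def EB6_def by simp_all


definition hv :: "bool list \<Rightarrow> nat \<Rightarrow> real" where
  "hv bs = (\<lambda>i. if i < 8 then (if bs ! i then -1/2 else 1/2) else 0)"
definition HB8 :: "bool list set" where "HB8 = {bs. length bs = 8 \<and> even (length (filter id bs))}"
definition HB7 :: "bool list set" where "HB7 = {bs. length bs = 8 \<and> length (filter id bs) = 4}"
definition HB6 :: "bool list set" where "HB6 = {bs. length bs = 8 \<and> length (filter id bs) = 4 \<and> bs ! 0 \<noteq> bs ! 1}"

lemma distinct_nl: "distinct (List.n_lists 8 [False, True])"
  by (rule distinct_n_lists) simp

lemma HB8_set: "HB8 = set EB8" and dEB8: "distinct EB8"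
proof -
  show "HB8 = set EB8" unfolding EB8_eq[symmetric] by (auto simp: set_n_lists HB8_def)
  show "distinct EB8" unfolding EB8_eq[symmetric] by (rule distinct_filter[OF distinct_nl])
qed
lemma HB7_set: "HB7 = set EB7" and dEB7: "distinct EB7"
proof -
  show "HB7 = set EB7" unfolding EB7_eq[symmetric] by (auto simp: set_n_lists HB7_def)
  show "distinct EB7" unfolding EB7_eq[symmetric] by (rule distinct_filter[OF distinct_nl])
qed
lemma HB6_set: "HB6 = set EB6" and dEB6: "distinct EB6"
proof -
  show "HB6 = set EB6" unfolding EB6_eq[symmetric] by (auto simp: set_n_lists HB6_def)
  show "distinct EB6" unfolding EB6_eq[symmetric] by (rule distinct_filter[OF distinct_nl])
qed

lemma hv_sum: assumes "length bs = 8" shows "(\<Sum>i<8. hv bs i) = 4 - real (length (filter id bs))"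
proof -
  have "(\<Sum>i<8. hv bs i) = (\<Sum>i<8. 1/2 - of_bool (bs ! i))"
    by (rule sum.cong) (auto simp: hv_def)
  also have "\<dots> = 4 - real (card ({..<8} \<inter> {i. bs ! i}))"
    by (simp add: sum_subtractf)
  also have "{..<8} \<inter> {i. bs ! i} = {i. i < length bs \<and> id (bs ! i)}" using assms by auto
  finally show ?thesis by (simp add: length_filter_conv_card)
qed

lemma hv_norm: "ip 8 (hv bs) (hv bs) = 2"
proof -
  have "ip 8 (hv bs) (hv bs) = (\<Sum>i<(8::nat). 1/4::real)"
    unfolding ip_def by (rule sum.cong) (auto simp: hv_def)
  then show ?thesis by simp
qed

lemma inj_hv: "inj_on hv {bs. length bs = 8}"
proof (rule inj_onI)
  fix a b assume a: "a \<in> {bs. length bs = 8}" and b: "b \<in> {bs. length bs = 8}" and e: "hv a = hv b"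
  show "a = b"
  proof (rule nth_equalityI)
    show "length a = length b" using a b by simp
    fix i assume "i < length a"
    then have "i < 8" using a by simp
    then show "a ! i = b ! i" using fun_cong[OF e, of i] by (auto simp: hv_def split: if_splits)
  qed
qed

lemma half_notin_Ints: "(1/2::real) \<notin> \<int>" "(-1/2::real) \<notin> \<int>"
proof -
  show "(1/2::real) \<notin> \<int>"
  proof
    assume "(1/2::real) \<in> \<int>"
    then obtain n :: int where "(1/2::real) = of_int n" by (auto elim: Ints_cases)
    then have "(1::real) = of_int (2*n)" by simp
    then have "1 = 2*n" by linarith
    then show False by presburger
  qed
  show "(-1/2::real) \<notin> \<int>"
  proof
    assume "(-1/2::real) \<in> \<int>"
    then obtain n :: int where "(-1/2::real) = of_int n" by (auto elim: Ints_cases)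
    then have "(-1::real) = of_int (2*n)" by simp
    then have "-1 = 2*n" by linarith
    then show False by presburger
  qed
qed

lemma hv0_notint: "hv bs 0 \<notin> \<int>"
  using half_notin_Ints by (auto simp: hv_def)

definition E8P :: "(nat \<Rightarrow> real) \<Rightarrow> bool" where
  "E8P a = ((\<forall>i\<ge>8. a i = 0) \<and> ((\<forall>i<8. a i \<in> \<int>) \<or> (\<forall>i<8. a i - 1/2 \<in> \<int>)) \<and>
            (\<exists>k::int. (\<Sum>i<8. a i) = 2 * of_int k))"

lemma sum_half8: "(\<Sum>i<8. half8 i) = 4"
proof -
  have "(\<Sum>i<8. half8 i) = (\<Sum>i<(8::nat). 1/2::real)" by (rule sum.cong) (auto simp: half8_def)
  then show ?thesis by simp
qed

lemma E8alt: "a \<in> E8_lattice \<longleftrightarrow> E8P a"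
proof
  assume "a \<in> E8_lattice"
  then consider "a \<in> D_lattice 8" | x where "x \<in> D_lattice 8" "a = vadd x half8"
    unfolding E8_lattice_def by blast
  then show "E8P a"
  proof cases
    case 1 then show ?thesis by (auto simp: E8P_def D_lattice_def int_vecs_def)
  next
    case 2
    then obtain k :: int where k: "(\<Sum>i<8. x i) = 2 * of_int k" "\<forall>i<8. x i \<in> \<int>" "\<forall>i\<ge>8. x i = 0"
      by (auto simp: D_lattice_def int_vecs_def)
    have "(\<Sum>i<8. a i) = (\<Sum>i<8. x i) + (\<Sum>i<8. half8 i)" using 2 by (simp add: sum_vadd)
    then have "(\<Sum>i<8. a i) = 2 * of_int (k + 2)" using k sum_half8 by simp
    moreover have "\<forall>i\<ge>8. a i = 0" using 2 k by (auto simp: vadd_def half8_def)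
    moreover have "\<forall>i<8. a i - 1/2 \<in> \<int>" using 2 k by (auto simp: vadd_def half8_def)
    ultimately show ?thesis unfolding E8P_def by blast
  qed
next
  assume E: "E8P a"
  then obtain k :: int where k: "(\<Sum>i<8. a i) = 2 * of_int k" and z: "\<forall>i\<ge>8. a i = 0"
    by (auto simp: E8P_def)
  from E consider "\<forall>i<8. a i \<in> \<int>" | "\<forall>i<8. a i - 1/2 \<in> \<int>" by (auto simp: E8P_def)
  then show "a \<in> E8_lattice"
  proof cases
    case 1
    then have "a \<in> D_lattice 8" using k z by (auto simp: D_lattice_def int_vecs_def)
    then show ?thesis by (simp add: E8_lattice_def)
  next
    case 2
    define x where "x = (\<lambda>i. a i - half8 i)"
    have "(\<Sum>i<8. x i) = (\<Sum>i<8. a i) - (\<Sum>i<8. half8 i)" by (simp add: x_def sum_subtractf)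
    then have sx: "(\<Sum>i<8. x i) = 2 * of_int (k - 2)" using k sum_half8 by simp
    have "x \<in> int_vecs 8" using 2 z by (auto simp: int_vecs_def x_def half8_def)
    then have "x \<in> D_lattice 8" unfolding D_lattice_def using sx by blast
    moreover have "a = vadd x half8" by (simp add: x_def vadd_def)
    ultimately show ?thesis unfolding E8_lattice_def by blast
  qed
qed

lemma hI1: "(x::real) \<in> \<int> \<Longrightarrow> y - 1/2 \<in> \<int> \<Longrightarrow> x + y - 1/2 \<in> \<int>"
  using Ints_add[of x "y - 1/2"] by (simp add: algebra_simps)
lemma hI2: "(x::real) - 1/2 \<in> \<int> \<Longrightarrow> y - 1/2 \<in> \<int> \<Longrightarrow> x + y \<in> \<int>"
proof -
  assume "x - 1/2 \<in> \<int>" "y - 1/2 \<in> \<int>"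
  then have "(x - 1/2) + (y - 1/2) + 1 \<in> \<int>" by (intro Ints_add) auto
  then show ?thesis by simp
qed
lemma hI3: "(x::real) - 1/2 \<in> \<int> \<Longrightarrow> - x - 1/2 \<in> \<int>"
proof -
  assume "x - 1/2 \<in> \<int>"
  then have "- (x - 1/2) - 1 \<in> \<int>" using Ints_diff[OF Ints_minus Ints_1] by blast
  moreover have "- (x - 1/2) - 1 = - x - 1/2" by simp
  ultimately show ?thesis by metis
qed

lemma E8_closed: "\<forall>a\<in>E8_lattice. \<forall>b\<in>E8_lattice. vadd a b \<in> E8_lattice"
proof (intro ballI)
  fix a b assume "a \<in> E8_lattice" "b \<in> E8_lattice"
  then have A: "E8P a" and B: "E8P b" by (simp_all add: E8alt)
  obtain ka :: int where ka: "(\<Sum>i<8. a i) = 2 * of_int ka" using A by (auto simp: E8P_def)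
  obtain kb :: int where kb: "(\<Sum>i<8. b i) = 2 * of_int kb" using B by (auto simp: E8P_def)
  have s: "(\<Sum>i<8. vadd a b i) = 2 * of_int (ka + kb)" using ka kb by (simp add: sum_vadd)
  have z: "\<forall>i\<ge>8. vadd a b i = 0" using A B by (auto simp: E8P_def vadd_def)
  have t: "(\<forall>i<8. vadd a b i \<in> \<int>) \<or> (\<forall>i<8. vadd a b i - 1/2 \<in> \<int>)"
  proof -
    have da: "(\<forall>i<8. a i \<in> \<int>) \<or> (\<forall>i<8. a i - 1/2 \<in> \<int>)" using A by (auto simp: E8P_def)
    have db: "(\<forall>i<8. b i \<in> \<int>) \<or> (\<forall>i<8. b i - 1/2 \<in> \<int>)" using B by (auto simp: E8P_def)
    show ?thesis using da db
    proof (elim disjE)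
      assume "\<forall>i<8. a i \<in> \<int>" "\<forall>i<8. b i \<in> \<int>"
      then show ?thesis by (auto simp: vadd_def)
    next
      assume "\<forall>i<8. a i \<in> \<int>" "\<forall>i<8. b i - 1/2 \<in> \<int>"
      then show ?thesis by (auto simp: vadd_def intro: hI1)
    next
      assume "\<forall>i<8. a i - 1/2 \<in> \<int>" "\<forall>i<8. b i \<in> \<int>"
      then have "\<forall>i<8. b i + a i - 1/2 \<in> \<int>" by (auto intro: hI1)
      then show ?thesis by (auto simp: vadd_def add.commute)
    next
      assume "\<forall>i<8. a i - 1/2 \<in> \<int>" "\<forall>i<8. b i - 1/2 \<in> \<int>"
      then show ?thesis by (auto simp: vadd_def intro: hI2)
    qed
  qed
  show "vadd a b \<in> E8_lattice" unfolding E8alt E8P_def using s z t by blast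
qed

lemma E8_neg: "\<forall>a\<in>E8_lattice. (\<lambda>i. - a i) \<in> E8_lattice"
proof
  fix a assume "a \<in> E8_lattice"
  then have A: "E8P a" by (simp add: E8alt)
  obtain ka :: int where ka: "(\<Sum>i<8. a i) = 2 * of_int ka" using A by (auto simp: E8P_def)
  have s: "(\<Sum>i<8. - a i) = 2 * of_int (- ka)" using ka by (simp add: sum_negf)
  have z: "\<forall>i\<ge>8. - a i = 0" using A by (auto simp: E8P_def)
  have t: "(\<forall>i<8. - a i \<in> \<int>) \<or> (\<forall>i<8. - a i - 1/2 \<in> \<int>)"
    using A by (auto simp: E8P_def intro: hI3)
  show "(\<lambda>i. - a i) \<in> E8_lattice" unfolding E8alt E8P_def using s z t by blast
qed

lemma ip_int_half:
  assumes "\<forall>i<8. a i \<in> \<int>" "\<forall>i<8. b i - 1/2 \<in> \<int>" "(\<Sum>i<8. a i) = 2 * of_int ka"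
  shows "ip 8 a b \<in> \<int>"
proof -
  have "ip 8 a b = (\<Sum>i<8. a i * (b i - 1/2) + a i / 2)"
    unfolding ip_def by (rule sum.cong) (auto simp: algebra_simps)
  also have "\<dots> = (\<Sum>i<8. a i * (b i - 1/2)) + of_int ka"
    using assms(3) by (simp add: sum.distrib sum_divide_distrib[symmetric])
  also have "\<dots> \<in> \<int>" using assms(1,2) by (intro Ints_add Ints_sum Ints_mult) auto
  finally show ?thesis .
qed

lemma ip_half_half:
  assumes "\<forall>i<8. a i - 1/2 \<in> \<int>" "\<forall>i<8. b i - 1/2 \<in> \<int>"
    "(\<Sum>i<8. a i) = 2 * of_int ka" "(\<Sum>i<8. b i) = 2 * of_int kb"
  shows "ip 8 a b \<in> \<int>"
proof -
  have "ip 8 a b = (\<Sum>i<8. (a i - 1/2) * (b i - 1/2) + a i / 2 + b i / 2 - 1/4)"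
    unfolding ip_def by (rule sum.cong) (auto simp: algebra_simps)
  also have "\<dots> = (\<Sum>i<8. (a i - 1/2) * (b i - 1/2)) + of_int (ka + kb - 2)"
    using assms(3,4) by (simp add: sum.distrib sum_subtractf sum_divide_distrib[symmetric])
  also have "\<dots> \<in> \<int>" using assms(1,2) by (intro Ints_add Ints_sum Ints_mult) auto
  finally show ?thesis .
qed

lemma E8_integral: "\<forall>a\<in>E8_lattice. \<forall>b\<in>E8_lattice. ip 8 a b \<in> \<int>"
proof (intro ballI)
  fix a b assume "a \<in> E8_lattice" "b \<in> E8_lattice"
  then have A: "E8P a" and B: "E8P b" by (simp_all add: E8alt)
  obtain ka :: int where ka: "(\<Sum>i<8. a i) = 2 * of_int ka" using A by (auto simp: E8P_def)
  obtain kb :: int where kb: "(\<Sum>i<8. b i) = 2 * of_int kb" using B by (auto simp: E8P_def)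
  have da: "(\<forall>i<8. a i \<in> \<int>) \<or> (\<forall>i<8. a i - 1/2 \<in> \<int>)" using A by (auto simp: E8P_def)
  have db: "(\<forall>i<8. b i \<in> \<int>) \<or> (\<forall>i<8. b i - 1/2 \<in> \<int>)" using B by (auto simp: E8P_def)
  show "ip 8 a b \<in> \<int>" using da db
  proof (elim disjE)
    assume "\<forall>i<8. a i \<in> \<int>" "\<forall>i<8. b i \<in> \<int>"
    then show ?thesis unfolding ip_def by (intro Ints_sum Ints_mult) auto
  next
    assume "\<forall>i<8. a i \<in> \<int>" "\<forall>i<8. b i - 1/2 \<in> \<int>"
    then show ?thesis using ip_int_half ka by blast
  next
    assume "\<forall>i<8. a i - 1/2 \<in> \<int>" "\<forall>i<8. b i \<in> \<int>"
    then show ?thesis using ip_int_half[of b a kb] kb ip_sym by metis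
  next
    assume "\<forall>i<8. a i - 1/2 \<in> \<int>" "\<forall>i<8. b i - 1/2 \<in> \<int>"
    then show ?thesis using ip_half_half ka kb by blast
  qed
qed


lemma sum8: "(\<Sum>i<(8::nat). f i) = f 0 + f 1 + f 2 + f 3 + f 4 + f 5 + f 6 + (f 7::real)"
  by (simp add: lessThan_nat_numeral)

lemma ip_half8: "ip 8 a half8 = (\<Sum>i<8. a i) / 2"
proof -
  have "ip 8 a half8 = (\<Sum>i<8. a i / 2)" unfolding ip_def by (rule sum.cong) (auto simp: half8_def)
  then show ?thesis by (simp add: sum_divide_distrib)
qed

lemma ip_w6: "ip 8 a (\<lambda>i. if i < 2 then -1 else 0) = - (a 0 + a 1)"
  unfolding ip_def by (simp add: sum8)

lemma half_sq:
  assumes "z - 1/2 \<in> \<int>" shows "(z::real) * z \<ge> 1/4"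
proof -
  obtain n :: int where n: "z - 1/2 = of_int n" using assms by (auto elim: Ints_cases)
  have "0 \<le> n * (n + 1)"
    by (cases "n \<ge> 0") (auto intro: mult_nonneg_nonneg mult_nonpos_nonpos)
  then have "0 \<le> real_of_int (n * (n+1))" by linarith
  moreover have "z * z - 1/4 = real_of_int (n * (n+1))" using n
    by (simp add: algebra_simps)
  ultimately show ?thesis by linarith
qed

lemma half_norm2:
  assumes z: "\<forall>i\<ge>8. a i = 0" and h: "\<forall>i<8. a i - 1/2 \<in> \<int>"
    and k: "(\<Sum>i<8. a i) = 2 * of_int k" and n: "ip 8 a a = 2"
  shows "a \<in> hv ` HB8"
proof -
  have nn: "\<forall>i\<in>{..<8}. 0 \<le> a i * a i - 1/4" using h half_sq by auto
  have "(\<Sum>i<8. a i * a i - 1/4) = 0" using n by (simp add: ip_def sum_subtractf)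
  then have "\<forall>i\<in>{..<8}. a i * a i - 1/4 = 0"
    using sum_nonneg_eq_0_iff[of "{..<8::nat}" "\<lambda>i. a i * a i - 1/4"] nn by simp
  then have pm: "a i = 1/2 \<or> a i = -1/2" if "i < 8" for i
  proof -
    have "(a i - 1/2) * (a i + 1/2) = 0" using \<open>\<forall>i\<in>{..<8}. a i * a i - 1/4 = 0\<close> that
      by (auto simp: algebra_simps)
    then show ?thesis by auto
  qed
  define bs where "bs = map (\<lambda>i. a i < 0) [0..<8]"
  have len: "length bs = 8" by (simp add: bs_def)
  have e: "hv bs = a"
  proof (rule ext)
    fix i show "hv bs i = a i"
    proof (cases "i < 8")
      case True
      then have "bs ! i = (a i < 0)" by (simp add: bs_def)
      then show ?thesis using pm[OF True] True by (auto simp: hv_def)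
    next
      case False then show ?thesis using z by (simp add: hv_def)
    qed
  qed
  define c where "c = length (filter id bs)"
  have "real c = 4 - 2 * of_int k" using hv_sum[OF len] e k by (simp add: c_def)
  then have "int c = 4 - 2 * k" by linarith
  then have "even (int c)" by presburger
  then have "even c" by simp
  then have "bs \<in> HB8" using len by (simp add: HB8_def c_def)
  then show ?thesis using e by blast
qed

lemma hv_E8: assumes "bs \<in> HB8" shows "hv bs \<in> E8_lattice"
proof -
  have len: "length bs = 8" and ev: "even (length (filter id bs))" using assms by (auto simp: HB8_def)
  obtain q where q: "length (filter id bs) = 2 * q" using ev by blast
  have "(\<Sum>i<8. hv bs i) = 2 * of_int (2 - int q)" using hv_sum[OF len] q by simp
  moreover have "\<forall>i\<ge>8. hv bs i = 0" by (simp add: hv_def)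
  moreover have "\<forall>i<8. hv bs i - 1/2 \<in> \<int>"
  proof (intro allI impI)
    fix i :: nat assume "i < 8"
    then have "hv bs i - 1/2 = (if bs ! i then -1 else 0)" by (simp add: hv_def)
    then show "hv bs i - 1/2 \<in> \<int>" by simp
  qed
  ultimately show ?thesis unfolding E8alt E8P_def by blast
qed

lemma D8_E8: "D_lattice 8 \<subseteq> E8_lattice" by (auto simp: E8_lattice_def)

lemma E8_roots: "{a \<in> E8_lattice. ip 8 a a = 2} = dv ` DP 8 \<union> hv ` HB8"
proof
  show "{a \<in> E8_lattice. ip 8 a a = 2} \<subseteq> dv ` DP 8 \<union> hv ` HB8"
  proof
    fix a assume "a \<in> {a \<in> E8_lattice. ip 8 a a = 2}"
    then have A: "E8P a" and n: "ip 8 a a = 2" by (auto simp: E8alt)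
    obtain k :: int where k: "(\<Sum>i<8. a i) = 2 * of_int k" and z: "\<forall>i\<ge>8. a i = 0"
      using A by (auto simp: E8P_def)
    have "(\<forall>i<8. a i \<in> \<int>) \<or> (\<forall>i<8. a i - 1/2 \<in> \<int>)" using A by (auto simp: E8P_def)
    then show "a \<in> dv ` DP 8 \<union> hv ` HB8"
    proof
      assume "\<forall>i<8. a i \<in> \<int>"
      then have "a \<in> D_lattice 8" using k z by (auto simp: D_lattice_def int_vecs_def)
      then have "a \<in> dv ` DP 8" using n D_roots[of 8] by blast
      then show ?thesis by blast
    next
      assume "\<forall>i<8. a i - 1/2 \<in> \<int>"
      then show ?thesis using half_norm2[OF z _ k n] by blast
    qed
  qed
next
  show "dv ` DP 8 \<union> hv ` HB8 \<subseteq> {a \<in> E8_lattice. ip 8 a a = 2}"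
    using D_roots[of 8] D8_E8 hv_E8 hv_norm by blast
qed

lemma E7_roots: "{a \<in> E7_lattice. ip 8 a a = 2} = av ` AP {..<8} \<union> hv ` HB7"
proof -
  have A7: "A_lattice 7 = {x \<in> int_vecs 8. (\<Sum>i<8. x i) = 0}" by (simp add: A_lattice_def)
  have AR: "{a \<in> A_lattice 7. ip 8 a a = 2} = av ` AP {..<8}" using A_roots[of 7] by simp
  have "{a \<in> E7_lattice. ip 8 a a = 2} = {a \<in> {a \<in> E8_lattice. ip 8 a a = 2}. ip 8 a half8 = 0}"
    by (auto simp: E7_lattice_def)
  also have "\<dots> = {a \<in> dv ` DP 8 \<union> hv ` HB8. (\<Sum>i<8. a i) = 0}"
    unfolding E8_roots ip_half8 by simp
  also have "{a \<in> dv ` DP 8. (\<Sum>i<8. a i) = 0} = av ` AP {..<8}"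
  proof -
    have "{a \<in> dv ` DP 8. (\<Sum>i<8. a i) = 0} = {a \<in> D_lattice 8. ip 8 a a = 2 \<and> (\<Sum>i<8. a i) = 0}"
      using D_roots[of 8] by blast
    also have "\<dots> = {a \<in> A_lattice 7. ip 8 a a = 2}"
    proof (rule set_eqI, rule iffI)
      fix a assume "a \<in> {a \<in> D_lattice 8. ip 8 a a = 2 \<and> (\<Sum>i<8. a i) = 0}"
      then show "a \<in> {a \<in> A_lattice 7. ip 8 a a = 2}" unfolding A7 D_lattice_def by blast
    next
      fix a assume a: "a \<in> {a \<in> A_lattice 7. ip 8 a a = 2}"
      then have "(\<Sum>i<8. a i) = 2 * of_int (0::int)" unfolding A7 by simp
      then show "a \<in> {a \<in> D_lattice 8. ip 8 a a = 2 \<and> (\<Sum>i<8. a i) = 0}"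
        using a unfolding A7 D_lattice_def by blast
    qed
    finally show ?thesis using AR by simp
  qed
  moreover have "{a \<in> hv ` HB8. (\<Sum>i<8. a i) = 0} = hv ` HB7"
  proof
    show "{a \<in> hv ` HB8. (\<Sum>i<8. a i) = 0} \<subseteq> hv ` HB7"
    proof
      fix a assume "a \<in> {a \<in> hv ` HB8. (\<Sum>i<8. a i) = 0}"
      then obtain bs where bs: "bs \<in> HB8" "a = hv bs" "(\<Sum>i<8. hv bs i) = 0" by auto
      then have "length (filter id bs) = 4" using hv_sum[of bs] by (auto simp: HB8_def)
      then show "a \<in> hv ` HB7" using bs by (auto simp: HB8_def HB7_def)
    qed
  next
    show "hv ` HB7 \<subseteq> {a \<in> hv ` HB8. (\<Sum>i<8. a i) = 0}"
    proof
      fix a assume "a \<in> hv ` HB7"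
      then obtain bs where bs: "bs \<in> HB7" "a = hv bs" by auto
      then have "bs \<in> HB8" by (auto simp: HB8_def HB7_def)
      moreover have "(\<Sum>i<8. hv bs i) = 0" using bs hv_sum[of bs] by (auto simp: HB7_def)
      ultimately show "a \<in> {a \<in> hv ` HB8. (\<Sum>i<8. a i) = 0}" using bs by auto
    qed
  qed
  moreover have "{a \<in> dv ` DP 8 \<union> hv ` HB8. (\<Sum>i<8. a i) = 0}
      = {a \<in> dv ` DP 8. (\<Sum>i<8. a i) = 0} \<union> {a \<in> hv ` HB8. (\<Sum>i<8. a i) = 0}" by blast
  ultimately show ?thesis by simp
qed

lemma E6_roots: "{a \<in> E6_lattice. ip 8 a a = 2} = av ` (AP {0,1} \<union> AP {2,3,4,5,6,7}) \<union> hv ` HB6"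
proof -
  have "{a \<in> E6_lattice. ip 8 a a = 2} = {a \<in> av ` AP {..<8} \<union> hv ` HB7. a 0 + a 1 = 0}"
    using E7_roots by (auto simp: E6_lattice_def ip_w6)
  also have "\<dots> = av ` {p \<in> AP {..<8}. av p 0 + av p 1 = 0} \<union> hv ` {bs \<in> HB7. hv bs 0 + hv bs 1 = 0}"
    by blast
  also have "{p \<in> AP {..<8}. av p 0 + av p 1 = 0} = AP {0,1} \<union> AP {2,3,4,5,6,7}"
  proof -
    have av01: "av (i,j) 0 + av (i,j) 1 = (if i < 2 then 1 else 0) - (if j < 2 then 1 else 0)" for i j
      by (auto simp: av_def ev_def)
    have r: "i < 8 \<Longrightarrow> \<not> i < 2 \<Longrightarrow> i \<in> {2,3,4,5,6,7}" for i :: nat by auto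
    have r2: "i < 2 \<Longrightarrow> i \<in> {0,1}" for i :: nat by auto
    show ?thesis
    proof (rule set_eqI, rule iffI)
      fix p assume "p \<in> {p \<in> AP {..<8}. av p 0 + av p 1 = 0}"
      then obtain i j where p: "p = (i,j)" "i < 8" "j < 8" "i \<noteq> j" "av (i,j) 0 + av (i,j) 1 = 0"
        by (auto simp: AP_def)
      have X: "(if i < 2 then 1 else 0) - (if j < 2 then 1 else (0::real)) = 0"
        using p(5) av01[of i j] by linarith
      then have "(i < 2) = (j < 2)" by (auto split: if_splits)
      then show "p \<in> AP {0,1} \<union> AP {2,3,4,5,6,7}"
        using p r[of i] r[of j] r2[of i] r2[of j] by (auto simp: AP_def)
    next
      fix p assume "p \<in> AP {0,1} \<union> AP {2,3,4,5,6,7}"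
      then obtain i j where p: "p = (i,j)" "i \<noteq> j" "(i \<in> {0,1} \<and> j \<in> {0,1}) \<or> (i \<in> {2,3,4,5,6,7} \<and> j \<in> {2,3,4,5,6,7})"
        by (auto simp: AP_def)
      then have ij: "i < 8" "j < 8" and c: "(i < 2) = (j < 2)" by auto
      have e: "av (i,j) 0 + av (i,j) 1 = 0" using av01[of i j] c by (simp split: if_splits)
      have "(i,j) \<in> AP {..<8}" using ij p(2) by (simp add: AP_def)
      then show "p \<in> {p \<in> AP {..<8}. av p 0 + av p 1 = 0}" using e p(1) by simp
    qed
  qed
  also have "{bs \<in> HB7. hv bs 0 + hv bs 1 = 0} = HB6"
  proof -
    have "hv bs 0 + hv bs 1 = 0 \<longleftrightarrow> bs ! 0 \<noteq> bs ! 1" for bs by (simp add: hv_def)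
    then show ?thesis by (auto simp: HB7_def HB6_def)
  qed
  finally show ?thesis .
qed


lemma hv_prod: "i < 8 \<Longrightarrow> j < 8 \<Longrightarrow> hv bs i * hv bs j = of_bool (bs ! i = bs ! j) / 2 - 1/4"
  by (auto simp: hv_def)

lemma HS:
  assumes d: "distinct EB" and l: "set EB \<subseteq> {bs. length bs = 8}"
  shows "(\<Sum>a\<in>hv ` set EB. (ip 8 x a)^2) =
    (\<Sum>i<8. \<Sum>j<8. x i * x j * ((1/2) * real (length (filter (\<lambda>bs. bs ! i = bs ! j) EB)) - (1/4) * real (length EB)))"
proof -
  have inj: "inj_on hv (set EB)" using inj_hv l by (rule inj_on_subset)
  have "(\<Sum>a\<in>hv ` set EB. (ip 8 x a)^2) = (\<Sum>bs\<in>set EB. (ip 8 x (hv bs))^2)"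
    by (rule sum.reindex[OF inj, unfolded comp_def])
  also have "\<dots> = (\<Sum>bs\<in>set EB. \<Sum>i<8. \<Sum>j<8. x i * x j * (hv bs i * hv bs j))"
  proof (rule sum.cong)
    fix bs
    have "(ip 8 x (hv bs))^2 = (\<Sum>i<8. x i * hv bs i) * (\<Sum>j<8. x j * hv bs j)"
      by (simp add: ip_def power2_eq_square)
    also have "\<dots> = (\<Sum>i<8. \<Sum>j<8. x i * x j * (hv bs i * hv bs j))"
      by (simp add: sum_product algebra_simps)
    finally show "(ip 8 x (hv bs))^2 = (\<Sum>i<8. \<Sum>j<8. x i * x j * (hv bs i * hv bs j))" .
  qed simp
  also have "\<dots> = (\<Sum>i<8. \<Sum>j<8. x i * x j * (\<Sum>bs\<in>set EB. hv bs i * hv bs j))"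
    by (simp add: sum_distrib_left sum.swap[of _ "set EB"])
  also have "\<dots> = (\<Sum>i<8. \<Sum>j<8. x i * x j * ((1/2) * real (length (filter (\<lambda>bs. bs ! i = bs ! j) EB)) - (1/4) * real (length EB)))"
  proof (intro sum.cong refl)
    fix i j assume "i \<in> {..<8::nat}" "j \<in> {..<8::nat}"
    then have "(\<Sum>bs\<in>set EB. hv bs i * hv bs j) = (\<Sum>bs\<in>set EB. of_bool (bs ! i = bs ! j) / 2 - 1/4)"
      by (intro sum.cong refl) (simp add: hv_prod)
    also have "\<dots> = (1/2) * real (card (set EB \<inter> {bs. bs ! i = bs ! j})) - (1/4) * real (card (set EB))"
      by (simp add: sum_subtractf sum_divide_distrib[symmetric])
    also have "card (set EB \<inter> {bs. bs ! i = bs ! j}) = length (filter (\<lambda>bs. bs ! i = bs ! j) EB)"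
      using distinct_length_filter[OF d] by (simp add: Int_commute)
    also have "card (set EB) = length EB" using d by (simp add: distinct_card)
    finally show "x i * x j * (\<Sum>bs\<in>set EB. hv bs i * hv bs j) = x i * x j * ((1/2) * real (length (filter (\<lambda>bs. bs ! i = bs ! j) EB)) - (1/4) * real (length EB))"
      by simp
  qed
  finally show ?thesis .
qed

lemma quad_const:
  fixes x :: "nat \<Rightarrow> real"
  shows "(\<Sum>i<n. \<Sum>j<n. x i * x j * (if i = j then \<alpha> else \<beta>)) = (\<alpha> - \<beta>) * (\<Sum>i<n. (x i)^2) + \<beta> * (\<Sum>i<n. x i)^2"
proof -
  have "(\<Sum>i<n. \<Sum>j<n. x i * x j * (if i = j then \<alpha> else \<beta>))
      = (\<Sum>i<n. \<Sum>j<n. \<beta> * (x i * x j) + (if i = j then (\<alpha> - \<beta>) * (x i * x j) else 0))"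
    by (intro sum.cong refl) (simp_all add: ring_distribs mult_ac split: if_split)
  also have "\<dots> = (\<Sum>i<n. \<beta> * (x i * (\<Sum>j<n. x j)) + (\<alpha> - \<beta>) * (x i * x i))"
    by (intro sum.cong refl) (simp add: sum.distrib sum_distrib_left)
  also have "\<dots> = (\<Sum>i<n. \<beta> * (x i * (\<Sum>j<n. x j))) + (\<Sum>i<n. (\<alpha> - \<beta>) * (x i * x i))"
    by (rule sum.distrib)
  also have "(\<Sum>i<n. \<beta> * (x i * (\<Sum>j<n. x j))) = \<beta> * ((\<Sum>i<n. x i) * (\<Sum>j<n. x j))"
    by (simp only: sum_distrib_left[symmetric] sum_distrib_right[symmetric])
  also have "(\<Sum>i<n. (\<alpha> - \<beta>) * (x i * x i)) = (\<alpha> - \<beta>) * (\<Sum>i<n. (x i)^2)"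
    by (simp only: sum_distrib_left[symmetric] power2_eq_square)
  finally show ?thesis by (simp add: power2_eq_square)
qed

lemma int_half_disj:
  assumes "\<forall>a\<in>A. a 0 \<in> \<int>" shows "A \<inter> hv ` B = {}"
  using assms hv0_notint by blast

lemma av_int: "p \<in> AP {..<8} \<Longrightarrow> av p \<in> int_vecs 8"
  by (auto simp: AP_def av_def ev_def int_vecs_def)

lemma ipsum: "ip m x x = (\<Sum>i<m. (x i)^2)" by (simp add: ip_def power2_eq_square)

lemma l8: "set EB8 \<subseteq> {bs. length bs = 8}" "set EB7 \<subseteq> {bs. length bs = 8}" "set EB6 \<subseteq> {bs. length bs = 8}"
  unfolding HB8_set[symmetric] HB7_set[symmetric] HB6_set[symmetric] by (auto simp: HB8_def HB7_def HB6_def)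

lemma E8_sum: "(\<Sum>a\<in>{a \<in> E8_lattice. ip 8 a a = 2}. (ip 8 x a)^2) = 60 * ip 8 x x"
proof -
  have disj: "dv ` DP 8 \<inter> hv ` HB8 = {}"
    by (rule int_half_disj) (auto dest!: dv_in_int simp: int_vecs_def)
  have fin1: "finite (dv ` DP 8)" using finite_DP by simp
  have fin2: "finite (hv ` HB8)" unfolding HB8_set by simp
  have "(\<Sum>a\<in>hv ` HB8. (ip 8 x a)^2) = (\<Sum>i<8. \<Sum>j<8. x i * x j * (if i = j then 32 else 0))"
    unfolding HB8_set HS[OF dEB8 l8(1)]
    by (intro sum.cong refl) (simp add: EB8_cnt EB_len)
  also have "\<dots> = 32 * ip 8 x x" by (simp add: quad_const ipsum)
  finally have h: "(\<Sum>a\<in>hv ` HB8. (ip 8 x a)^2) = 32 * ip 8 x x" .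
  show ?thesis unfolding E8_roots sum.union_disjoint[OF fin1 fin2 disj] h SD by simp
qed


lemma E7_sum:
  assumes s: "(\<Sum>i<8. x i) = 0"
  shows "(\<Sum>a\<in>{a \<in> E7_lattice. ip 8 a a = 2}. (ip 8 x a)^2) = 36 * ip 8 x x"
proof -
  have disj: "av ` AP {..<8} \<inter> hv ` HB7 = {}"
    by (rule int_half_disj) (auto dest!: av_int simp: int_vecs_def)
  have fin1: "finite (av ` AP {..<8})" using finite_AP by simp
  have fin2: "finite (hv ` HB7)" unfolding HB7_set by simp
  have "(\<Sum>a\<in>hv ` HB7. (ip 8 x a)^2) = (\<Sum>i<8. \<Sum>j<8. x i * x j * (if i = j then 35/2 else -5/2))"
    unfolding HB7_set HS[OF dEB7 l8(2)]
    by (intro sum.cong refl) (simp add: EB7_cnt EB_len)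
  also have "\<dots> = 20 * ip 8 x x" using s by (simp add: quad_const ipsum)
  finally have h: "(\<Sum>a\<in>hv ` HB7. (ip 8 x a)^2) = 20 * ip 8 x x" .
  have a: "(\<Sum>a\<in>av ` AP {..<8}. (ip 8 x a)^2) = 16 * ip 8 x x"
    using SA[of "{..<8::nat}" 8 x] s by (simp add: ipsum)
  show ?thesis unfolding E7_roots sum.union_disjoint[OF fin1 fin2 disj] h a by simp
qed

lemma poly6:
  fixes a0 a1 a2 a3 a4 a5 a6 a7 :: real
  assumes "a0 + a1 = 0" "a0 + a1 + a2 + a3 + a4 + a5 + a6 + a7 = 0"
  shows "2 * 2 * (a0^2 + a1^2) - 2 * (a0 + a1)^2
       + (2 * 6 * (a2^2 + a3^2 + a4^2 + a5^2 + a6^2 + a7^2) - 2 * (a2 + a3 + a4 + a5 + a6 + a7)^2)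
       + (10 * (a0 - a1)^2 + 12 * (a2^2 + a3^2 + a4^2 + a5^2 + a6^2 + a7^2) - 2 * (a2 + a3 + a4 + a5 + a6 + a7)^2)
       = 24 * (a0^2 + a1^2 + a2^2 + a3^2 + a4^2 + a5^2 + a6^2 + a7^2)"
proof -
  have 1: "a1 = - a0" using assms(1) by simp
  have 2: "a7 = -(a2 + a3 + a4 + a5 + a6)" using assms by simp
  show ?thesis unfolding 1 2 by (simp add: power2_eq_square algebra_simps)
qed

lemma E6_half:
  "(\<Sum>i<8. \<Sum>j<8. x i * x j * ((1/2) * real (length (filter (\<lambda>bs. bs ! i = bs ! j) EB6)) - (1/4) * real (length EB6)))
   = 10 * (x 0 - x 1)^2 + 12 * ((x 2)^2 + (x 3)^2 + (x 4)^2 + (x 5)^2 + (x 6)^2 + (x 7)^2) - 2 * (x 2 + x 3 + x 4 + x 5 + x 6 + x 7)^2"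
proof -
  have "(\<Sum>i<8. \<Sum>j<8. x i * x j * ((1/2) * real (length (filter (\<lambda>bs. bs ! i = bs ! j) EB6)) - (1/4) * real (length EB6)))
      = (\<Sum>i<8. \<Sum>j<8. x i * x j * ((1/2) * (if i = j then 40 else if {i,j} = {0,1} then 0 else if i < 2 \<or> j < 2 then 20 else 16) - 10))"
    by (intro sum.cong refl) (simp add: EB6_cnt EB_len)
  also have "\<dots> = 10 * (x 0 - x 1)^2 + 12 * ((x 2)^2 + (x 3)^2 + (x 4)^2 + (x 5)^2 + (x 6)^2 + (x 7)^2) - 2 * (x 2 + x 3 + x 4 + x 5 + x 6 + x 7)^2"
    by (simp add: sum8 doubleton_eq_iff power2_eq_square algebra_simps)
  finally show ?thesis .
qed

lemma E6_sum:
  assumes c1: "x 0 + x 1 = 0" and s: "(\<Sum>i<8. x i) = 0"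
  shows "(\<Sum>a\<in>{a \<in> E6_lattice. ip 8 a a = 2}. (ip 8 x a)^2) = 24 * ip 8 x x"
proof -
  have sub: "AP {0,1} \<subseteq> AP {..<8}" "AP {2,3,4,5,6,7} \<subseteq> AP {..<8}" by (auto simp: AP_def)
  have d0: "AP {0,1} \<inter> AP {2,3,4,5,6,7} = {}" by (auto simp: AP_def)
  have dA: "av ` AP {0,1} \<inter> av ` AP {2,3,4,5,6,7} = {}"
    using inj_on_image_Int[OF inj_av sub] d0 by simp
  have disj: "av ` (AP {0,1} \<union> AP {2,3,4,5,6,7}) \<inter> hv ` HB6 = {}"
    by (rule int_half_disj) (use sub in \<open>auto dest!: av_int simp: int_vecs_def\<close>)
  have finA: "finite (av ` AP {0,1})" "finite (av ` AP {2,3,4,5,6,7})" by (simp_all add: finite_AP)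
  have fin1: "finite (av ` (AP {0,1} \<union> AP {2,3,4,5,6,7}))" using finA by (simp only: image_Un finite_Un)
  have fin2: "finite (hv ` HB6)" unfolding HB6_set by simp
  have h: "(\<Sum>a\<in>hv ` HB6. (ip 8 x a)^2) = 10 * (x 0 - x 1)^2 + 12 * ((x 2)^2 + (x 3)^2 + (x 4)^2 + (x 5)^2 + (x 6)^2 + (x 7)^2) - 2 * (x 2 + x 3 + x 4 + x 5 + x 6 + x 7)^2"
    unfolding HB6_set HS[OF dEB6 l8(3)] E6_half ..
  have a1: "(\<Sum>a\<in>av ` AP {0,1}. (ip 8 x a)^2) = 2 * 2 * ((x 0)^2 + (x 1)^2) - 2 * (x 0 + x 1)^2"
    using SA[of "{0,1}" 8 x] by simp
  have a2: "(\<Sum>a\<in>av ` AP {2,3,4,5,6,7}. (ip 8 x a)^2) = 2 * 6 * ((x 2)^2 + (x 3)^2 + (x 4)^2 + (x 5)^2 + (x 6)^2 + (x 7)^2) - 2 * (x 2 + x 3 + x 4 + x 5 + x 6 + x 7)^2"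
    using SA[of "{2,3,4,5,6,7}" 8 x] by (simp add: add.assoc)
  have s8: "x 0 + x 1 + x 2 + x 3 + x 4 + x 5 + x 6 + x 7 = 0" using s by (simp add: sum8)
  have "(\<Sum>a\<in>{a \<in> E6_lattice. ip 8 a a = 2}. (ip 8 x a)^2)
      = (\<Sum>a\<in>av ` AP {0,1}. (ip 8 x a)^2) + (\<Sum>a\<in>av ` AP {2,3,4,5,6,7}. (ip 8 x a)^2) + (\<Sum>a\<in>hv ` HB6. (ip 8 x a)^2)"
  proof -
    have "(\<Sum>a\<in>av ` (AP {0,1} \<union> AP {2,3,4,5,6,7}). (ip 8 x a)^2)
        = (\<Sum>a\<in>av ` AP {0,1}. (ip 8 x a)^2) + (\<Sum>a\<in>av ` AP {2,3,4,5,6,7}. (ip 8 x a)^2)"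
      unfolding image_Un by (rule sum.union_disjoint[OF finA dA])
    then show ?thesis unfolding E6_roots sum.union_disjoint[OF fin1 fin2 disj] by simp
  qed
  also have "\<dots> = 24 * ((x 0)^2 + (x 1)^2 + (x 2)^2 + (x 3)^2 + (x 4)^2 + (x 5)^2 + (x 6)^2 + (x 7)^2)"
    unfolding a1 a2 h using poly6[OF c1 s8] by simp
  also have "\<dots> = 24 * ip 8 x x" by (simp add: ipsum sum8)
  finally show ?thesis .
qed


lemma fin_E8: "finite {a \<in> E8_lattice. ip 8 a a = 2}"
  unfolding E8_roots HB8_set using finite_DP by simp
lemma fin_E7: "finite {a \<in> E7_lattice. ip 8 a a = 2}"
  unfolding E7_roots HB7_set using finite_AP by simp
lemma fin_E6: "finite {a \<in> E6_lattice. ip 8 a a = 2}"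
  unfolding E6_roots HB6_set using finite_AP by simp

lemma E7_closed: "\<forall>a\<in>E7_lattice. \<forall>b\<in>E7_lattice. vadd a b \<in> E7_lattice"
  using E8_closed by (auto simp: E7_lattice_def ip_add_left)
lemma E7_neg: "\<forall>a\<in>E7_lattice. (\<lambda>i. - a i) \<in> E7_lattice"
  using E8_neg by (auto simp: E7_lattice_def ip_neg_left)
lemma E7_integral: "\<forall>a\<in>E7_lattice. \<forall>b\<in>E7_lattice. ip 8 a b \<in> \<int>"
  using E8_integral by (auto simp: E7_lattice_def)
lemma E6_closed: "\<forall>a\<in>E6_lattice. \<forall>b\<in>E6_lattice. vadd a b \<in> E6_lattice"
  using E7_closed by (auto simp: E6_lattice_def ip_add_left)
lemma E6_neg: "\<forall>a\<in>E6_lattice. (\<lambda>i. - a i) \<in> E6_lattice"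
  using E7_neg by (auto simp: E6_lattice_def ip_neg_left)
lemma E6_integral: "\<forall>a\<in>E6_lattice. \<forall>b\<in>E6_lattice. ip 8 a b \<in> \<int>"
  using E7_integral by (auto simp: E6_lattice_def)

lemma case_E8:
  assumes "g \<in> dual_lattice TypeE8"
    and "k = Inf ((\<lambda>a. ip (rt_dim TypeE8) a a) ` coset g (root_lattice TypeE8))"
    and "eta \<in> coset g (root_lattice TypeE8)"
    and "ip (rt_dim TypeE8) eta eta = k"
  shows "real (card (X_set TypeE8 g k eta)) = k * real (coxeter_number TypeE8)"
proof -
  note df = dual_facts[OF assms(1)]
  have sumid: "\<forall>x. True \<longrightarrow>
     (\<Sum>a\<in>{a \<in> E8_lattice. ip 8 a a = 2}. (ip 8 x a)^2) = 2 * 30 * ip 8 x x"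
    using E8_sum by simp
  show ?thesis
    using main_generic[OF E8_closed E8_neg E8_integral fin_E8 sumid, where eta=eta and g=g and k=k]
      df(2) assms(2-4)
    by (simp add: X_set_def)
qed

lemma case_E7:
  assumes "g \<in> dual_lattice TypeE7"
    and "k = Inf ((\<lambda>a. ip (rt_dim TypeE7) a a) ` coset g (root_lattice TypeE7))"
    and "eta \<in> coset g (root_lattice TypeE7)"
    and "ip (rt_dim TypeE7) eta eta = k"
  shows "real (card (X_set TypeE7 g k eta)) = k * real (coxeter_number TypeE7)"
proof -
  note df = dual_facts[OF assms(1)]
  have sumid: "\<forall>x. ip 8 x half8 = 0 \<longrightarrow>
     (\<Sum>a\<in>{a \<in> E7_lattice. ip 8 a a = 2}. (ip 8 x a)^2) = 2 * 18 * ip 8 x x"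
    using E7_sum by (simp add: ip_half8)
  have orth: "\<forall>r\<in>E7_lattice. ip 8 r half8 = 0" by (simp add: E7_lattice_def)
  have Ceta: "ip 8 eta half8 = 0"
    using eta_orth[of eta g E7_lattice 8] assms(3) df(1) orth by simp
  show ?thesis
    using main_generic[OF E7_closed E7_neg E7_integral fin_E7 sumid, where eta=eta and g=g and k=k]
      Ceta df(2) assms(2-4)
    by (simp add: X_set_def)
qed

lemma case_E6:
  assumes "g \<in> dual_lattice TypeE6"
    and "k = Inf ((\<lambda>a. ip (rt_dim TypeE6) a a) ` coset g (root_lattice TypeE6))"
    and "eta \<in> coset g (root_lattice TypeE6)"
    and "ip (rt_dim TypeE6) eta eta = k"
  shows "real (card (X_set TypeE6 g k eta)) = k * real (coxeter_number TypeE6)"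
proof -
  note df = dual_facts[OF assms(1)]
  define w where "w = (\<lambda>i::nat. if i < 2 then -1 else (0::real))"
  have sumid: "\<forall>x. ip 8 x half8 = 0 \<and> ip 8 x w = 0 \<longrightarrow>
     (\<Sum>a\<in>{a \<in> E6_lattice. ip 8 a a = 2}. (ip 8 x a)^2) = 2 * 12 * ip 8 x x"
  proof (intro allI impI)
    fix x assume "ip 8 x half8 = 0 \<and> ip 8 x w = 0"
    then have "(\<Sum>i<8. x i) = 0" "x 0 + x 1 = 0" by (auto simp: ip_half8 w_def ip_w6)
    then show "(\<Sum>a\<in>{a \<in> E6_lattice. ip 8 a a = 2}. (ip 8 x a)^2) = 2 * 12 * ip 8 x x"
      using E6_sum by simp
  qed
  have orth1: "\<forall>r\<in>E6_lattice. ip 8 r half8 = 0" by (simp add: E6_lattice_def E7_lattice_def)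
  have orth2: "\<forall>r\<in>E6_lattice. ip 8 r w = 0" by (simp add: E6_lattice_def w_def)
  have Ceta: "ip 8 eta half8 = 0 \<and> ip 8 eta w = 0"
    using eta_orth[of eta g E6_lattice 8] assms(3) df(1) orth1 orth2 by simp
  show ?thesis
    using main_generic[OF E6_closed E6_neg E6_integral fin_E6 sumid, where eta=eta and g=g and k=k]
      Ceta df(2) assms(2-4)
    by (simp add: X_set_def)
qed

theorem mainTheorem1:
  fixes t :: root_type and g eta :: "nat \<Rightarrow> real" and k :: real
  assumes "valid_type t"
    and "g \<in> dual_lattice t"
    and "k = Inf ((\<lambda>a. ip (rt_dim t) a a) ` coset g (root_lattice t))"
    and "eta \<in> coset g (root_lattice t)"
    and "ip (rt_dim t) eta eta = k"
  shows "real (card (X_set t g k eta)) = k * real (coxeter_number t)"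
proof (cases t)
  case (TypeA n) then show ?thesis using case_A assms(2-5) by blast
next
  case (TypeD n) then show ?thesis using case_D assms by auto
next
  case TypeE6 then show ?thesis using case_E6 assms(2-5) by blast
next
  case TypeE7 then show ?thesis using case_E7 assms(2-5) by blast
next
  case TypeE8 then show ?thesis using case_E8 assms(2-5) by blast
qed


end
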